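(* Let $n\ge 1$, $d_1,\dots,d_n\ge 1$, $L_i\in\mathbb{C}^{d_i\times d_i}$ ($i=1,\dots,n$) and $C_{i,i-1}\in\mathbb{C}^{d_i\times d_{i-1}}$ ($i=2,\dots,n$). Assume: (i) each $L_i$ is invertible and diagonalizable, $L_iV_i=V_i\Lambda_i$ with $V_i$ invertible and $\Lambda_i=\mathrm{diag}(\lambda_{i,1},\dots,\lambda_{i,d_i})$; (ii) $\sigma(L_i)\cap\sigma(L_j)=\emptyset$ for all $i\neq j$; (iii) $\|L_1\|<\|L_2\|<\cdots<\|L_n\|\le 1$. Let $\mathsf{NonLin}$ be the nonlinear chained cascade map $\mathsf{NonLin}(x_1,\dots,x_n)=(L_1x_1+N_1(x_1),\;L_2x_2+C_{2,1}x_1+N_2(x_1,x_2),\;\dots,\;L_nx_n+C_{n,n-1}x_{n-1}+N_n(x_{n-1},x_n))$ for some maps $N_1:\mathbb{C}^{d_1}\to\mathbb{C}^{d_1}$, $N_i:\mathbb{C}^{d_{i-1}}\times\mathbb{C}^{d_i}\to\mathbb{C}^{d_i}$, and let $\tau:\mathbb{C}^{d_1}\times\cdots\times\mathbb{C}^{d_n}\to\mathbb{C}^{d_1}\times\cdots\times\mathbb{C}^{d_n}$ be a topological conjugacy (homeomorphism) with $\mathsf{Lin}=\tau^{-1}\circ\mathsf{NonLin}\circ\tau$. Then for every $y\in\mathbb{C}^{d_1}\times\cdots\times\mathbb{C}^{d_n}$, $$\lim_{t\to\infty}\Big\|\mathsf{NonLin}^{\circ t}(y)-(\tau\circ\mathsf{Nom}\circ\tau^{-1})^{\circ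 t}\big((\tau\circ\mathsf{pert}\circ\tau^{-1})(y)\big)\Big\|_\times=0.$$
   Context: Each $\mathbb{C}^{d_i}$ carries a fixed norm $\|\cdot\|$, matrices carry the induced operator norm, and $\|(x_1,\dots,x_n)\|_\times=\sum_i\|x_i\|$. $\mathsf{Lin}(x_1,\dots,x_n)=(L_1x_1,\;L_2x_2+C_{2,1}x_1,\;\dots,\;L_nx_n+C_{n,n-1}x_{n-1})$, $\mathsf{Nom}(x_1,\dots,x_n)=(L_1x_1,\dots,L_nx_n)$, and $\mathsf{F}^{\circ t}$ is the $t$-fold iterate. Matrices $D_{i,j}$ ($1\le j\le i\le n$) are defined recursively in $i$: $D_{i,i}=I_{d_i}$; for $i\ge 2$, $1\le j\le i-1$, $[\tilde C_{i,j}]_{\ell,m}=[V_i^{-1}C_{i,i-1}D_{i-1,j}V_j]_{\ell,m}(1-\lambda_{j,m}/\lambda_{i,\ell})^{-1}$ and $D_{i,j}=L_i^{-1}V_i\tilde C_{i,j}V_j^{-1}$. Define $\mathsf{pert}_1(x_1)=x_1$, $\mathsf{pert}_i(x_1,\dots,x_i)=x_i+\sum_{j=1}^{i-1}(-1)^{i-1-j}D_{i,j}\mathsf{pert}_j(x_1,\dots,x_j)$ for $i\ge2$, and $\mathsf{pert}(x)=(\mathsf{pert}_1(x_1),\dots,\mathsf{pert}_n(x_1,\dots,x_n))$. *)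

theory Defs
  imports Complex_Main "Jordan_Normal_Form.Spectral_Radius"
begin

(* Convention: the state x = (x_1,...,x_n) is a function x :: nat => complex vec with
   x i in C^{d i} for 1 <= i <= n and x i = the empty vector (dimension 0) for other i.
   Matrix/vector indices inside C^{d_i} are 0-based (JNF convention). *)

definition state_space :: "nat \<Rightarrow> (nat \<Rightarrow> nat) \<Rightarrow> (nat \<Rightarrow> complex vec) set" where
  "state_space n d = {x. (\<forall>i\<in>{1..n}. x i \<in> carrier_vec (d i)) \<and>
                         (\<forall>i. i \<notin> {1..n} \<longrightarrow> x i = vec 0 (\<lambda>_. 0))}"

definition is_vnorm :: "nat \<Rightarrow> (complex vec \<Rightarrow> real) \<Rightarrow> bool" where
  "is_vnorm d N \<longleftrightarrow>
     (\<forall>x\<in>carrier_vec d. 0 \<le> N x \<and> (N x = 0 \<longleftrightarrow> x = 0\<^sub>v d)) \<and>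
     (\<forall>x\<in>carrier_vec d. \<forall>a. N (a \<cdot>\<^sub>v x) = cmod a * N x) \<and>
     (\<forall>x\<in>carrier_vec d. \<forall>y\<in>carrier_vec d. N (x + y) \<le> N x + N y)"

definition op_norm :: "nat \<Rightarrow> (complex vec \<Rightarrow> real) \<Rightarrow> complex mat \<Rightarrow> real" where
  "op_norm d N A = (SUP x\<in>{x\<in>carrier_vec d. N x \<le> 1}. N (A *\<^sub>v x))"

definition prod_norm :: "nat \<Rightarrow> (nat \<Rightarrow> complex vec \<Rightarrow> real) \<Rightarrow> (nat \<Rightarrow> complex vec) \<Rightarrow> real" where
  "prod_norm n N x = (\<Sum>i=1..n. N i (x i))"

definition state_diff :: "(nat \<Rightarrow> complex vec) \<Rightarrow> (nat \<Rightarrow> complex vec) \<Rightarrow> nat \<Rightarrow> complex vec" where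
  "state_diff x y = (\<lambda>i. x i - y i)"

definition cont_state :: "nat \<Rightarrow> (nat \<Rightarrow> nat) \<Rightarrow> (nat \<Rightarrow> complex vec \<Rightarrow> real)
    \<Rightarrow> ((nat \<Rightarrow> complex vec) \<Rightarrow> (nat \<Rightarrow> complex vec)) \<Rightarrow> bool" where
  "cont_state n d N f \<longleftrightarrow>
     (\<forall>x\<in>state_space n d. \<forall>e>0. \<exists>\<delta>>0. \<forall>y\<in>state_space n d.
        prod_norm n N (state_diff y x) < \<delta> \<longrightarrow> prod_norm n N (state_diff (f y) (f x)) < e)"

definition homeo_state :: "nat \<Rightarrow> (nat \<Rightarrow> nat) \<Rightarrow> (nat \<Rightarrow> complex vec \<Rightarrow> real)
    \<Rightarrow> ((nat \<Rightarrow> complex vec) \<Rightarrow> (nat \<Rightarrow> complex vec))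
    \<Rightarrow> ((nat \<Rightarrow> complex vec) \<Rightarrow> (nat \<Rightarrow> complex vec)) \<Rightarrow> bool" where
  "homeo_state n d N tau tinv \<longleftrightarrow>
     (\<forall>x\<in>state_space n d. tau x \<in> state_space n d \<and> tinv x \<in> state_space n d \<and>
                          tinv (tau x) = x \<and> tau (tinv x) = x) \<and>
     cont_state n d N tau \<and> cont_state n d N tinv"

definition mat_inv :: "complex mat \<Rightarrow> complex mat" where
  "mat_inv A = (SOME B. B \<in> carrier_mat (dim_row A) (dim_row A) \<and>
                        A * B = 1\<^sub>m (dim_row A) \<and> B * A = 1\<^sub>m (dim_row A))"

(* Lin, Nom, NonLin; C i stands for C_{i,i-1} *)
definition Lin_map :: "nat \<Rightarrow> (nat \<Rightarrow> complex mat) \<Rightarrow> (nat \<Rightarrow> complex mat)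
    \<Rightarrow> (nat \<Rightarrow> complex vec) \<Rightarrow> nat \<Rightarrow> complex vec" where
  "Lin_map n L C x = (\<lambda>i. if i = 1 \<and> 1 \<le> n then L 1 *\<^sub>v x 1
                          else if 2 \<le> i \<and> i \<le> n then L i *\<^sub>v x i + C i *\<^sub>v x (i - 1)
                          else x i)"

definition Nom_map :: "nat \<Rightarrow> (nat \<Rightarrow> complex mat) \<Rightarrow> (nat \<Rightarrow> complex vec) \<Rightarrow> nat \<Rightarrow> complex vec" where
  "Nom_map n L x = (\<lambda>i. if 1 \<le> i \<and> i \<le> n then L i *\<^sub>v x i else x i)"

definition NonLin_map :: "nat \<Rightarrow> (nat \<Rightarrow> complex mat) \<Rightarrow> (nat \<Rightarrow> complex mat)
    \<Rightarrow> (complex vec \<Rightarrow> complex vec) \<Rightarrow> (nat \<Rightarrow> complex vec \<Rightarrow> complex vec \<Rightarrow> complex vec)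
    \<Rightarrow> (nat \<Rightarrow> complex vec) \<Rightarrow> nat \<Rightarrow> complex vec" where
  "NonLin_map n L C N1 Nf x = (\<lambda>i. if i = 1 \<and> 1 \<le> n then L 1 *\<^sub>v x 1 + N1 (x 1)
                          else if 2 \<le> i \<and> i \<le> n then
                             L i *\<^sub>v x i + C i *\<^sub>v x (i - 1) + Nf i (x (i - 1)) (x i)
                          else x i)"

(* The matrices D_{i,j}, 1 <= j <= i; lam i l is the l-th (0-based) eigenvalue of L i *)
fun Dmat :: "(nat \<Rightarrow> nat) \<Rightarrow> (nat \<Rightarrow> complex mat) \<Rightarrow> (nat \<Rightarrow> complex mat) \<Rightarrow> (nat \<Rightarrow> complex mat)
    \<Rightarrow> (nat \<Rightarrow> nat \<Rightarrow> complex) \<Rightarrow> nat \<Rightarrow> nat \<Rightarrow> complex mat" where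
  "Dmat d L C V lam 0 j = 1\<^sub>m (d 0)"
| "Dmat d L C V lam (Suc k) j =
     (if j = Suc k then 1\<^sub>m (d (Suc k))
      else (let i = Suc k;
                M = mat_inv (V i) * C i * Dmat d L C V lam k j * V j;
                Ct = mat (d i) (d j) (\<lambda>(l, m). M $$ (l, m) / (1 - lam j m / lam i l))
            in mat_inv (L i) * V i * Ct * mat_inv (V j)))"

(* pert_vals k gives pert_j(x_1..x_j) for all j <= k *)
fun pert_vals :: "(nat \<Rightarrow> nat) \<Rightarrow> (nat \<Rightarrow> complex mat) \<Rightarrow> (nat \<Rightarrow> complex mat) \<Rightarrow> (nat \<Rightarrow> complex mat)
    \<Rightarrow> (nat \<Rightarrow> nat \<Rightarrow> complex) \<Rightarrow> (nat \<Rightarrow> complex vec) \<Rightarrow> nat \<Rightarrow> nat \<Rightarrow> complex vec" where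
  "pert_vals d L C V lam x 0 = (\<lambda>j. x j)"
| "pert_vals d L C V lam x (Suc k) =
     (pert_vals d L C V lam x k)(Suc k :=
        foldr (\<lambda>j acc. acc + ((-1) ^ (k - j)) \<cdot>\<^sub>v (Dmat d L C V lam (Suc k) j *\<^sub>v pert_vals d L C V lam x k j))
              [1..<Suc k] (x (Suc k)))"

definition pert_map :: "nat \<Rightarrow> (nat \<Rightarrow> nat) \<Rightarrow> (nat \<Rightarrow> complex mat) \<Rightarrow> (nat \<Rightarrow> complex mat)
    \<Rightarrow> (nat \<Rightarrow> complex mat) \<Rightarrow> (nat \<Rightarrow> nat \<Rightarrow> complex) \<Rightarrow> (nat \<Rightarrow> complex vec) \<Rightarrow> nat \<Rightarrow> complex vec" where
  "pert_map n d L C V lam x = (\<lambda>i. if 1 \<le> i \<and> i \<le> n then pert_vals d L C V lam x i i else x i)"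

end

theory Submission
  imports Defs
begin


lemma subseq_real:
  fixes f :: "nat \<Rightarrow> 'a \<Rightarrow> real"
  assumes "finite I" "\<forall>i\<in>I. \<exists>B. \<forall>t. \<bar>f t i\<bar> \<le> B"
  shows "\<exists>r. strict_mono r \<and> (\<forall>i\<in>I. convergent (\<lambda>t. f (r t) i))"
  using assms
proof (induction I rule: finite_induct)
  case empty
  have "strict_mono (id::nat\<Rightarrow>nat)" by (simp add: strict_mono_def)
  then show ?case by blast
next
  case (insert i I)
  have "\<forall>i\<in>I. \<exists>B. \<forall>t. \<bar>f t i\<bar> \<le> B" using insert.prems by simp
  then obtain r where r: "strict_mono r" "\<forall>i\<in>I. convergent (\<lambda>t. f (r t) i)"
    using insert.IH by blast
  obtain B where B: "\<forall>t. \<bar>f t i\<bar> \<le> B" using insert.prems by blast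
  obtain s where s: "strict_mono s" "monoseq (\<lambda>n. f (r (s n)) i)"
    using seq_monosub[of "\<lambda>n. f (r n) i"] by blast
  have "Bseq (\<lambda>n. f (r (s n)) i)" using B by (intro BseqI'[of _ B]) simp
  hence c: "convergent (\<lambda>n. f (r (s n)) i)" using s Bseq_monoseq_convergent by blast
  have convJ: "convergent (\<lambda>t. f (r (s t)) j)" if j: "j \<in> I" for j
  proof -
    have "convergent (\<lambda>t. f (r t) j)" using r(2) j by blast
    then obtain l where "(\<lambda>t. f (r t) j) \<longlonglongrightarrow> l" unfolding convergent_def by blast
    from LIMSEQ_subseq_LIMSEQ[OF this s(1)] have "(\<lambda>t. f (r (s t)) j) \<longlonglongrightarrow> l"
      unfolding comp_def .
    thus ?thesis unfolding convergent_def by blast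
  qed
  have sm: "strict_mono (\<lambda>t. r (s t))" using strict_mono_o[OF r(1) s(1)] unfolding comp_def .
  have "\<forall>j\<in>insert i I. convergent (\<lambda>t. f (r (s t)) j)"
    using c convJ by blast
  with sm show ?case by blast
qed

lemma subseq_complex:
  fixes f :: "nat \<Rightarrow> 'a \<Rightarrow> complex"
  assumes "finite I" "\<forall>i\<in>I. \<exists>B. \<forall>t. cmod (f t i) \<le> B"
  shows "\<exists>r. strict_mono r \<and> (\<forall>i\<in>I. \<exists>l. (\<lambda>t. f (r t) i) \<longlonglongrightarrow> l)"
proof -
  define g where "g t p = (if snd p then Re (f t (fst p)) else Im (f t (fst p)))" for t p
  have gb: "\<exists>B. \<forall>t. \<bar>g t p\<bar> \<le> B" if "p \<in> I \<times> (UNIV::bool set)" for p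
  proof -
    have "fst p \<in> I" using that by auto
    then obtain B where B: "\<forall>t. cmod (f t (fst p)) \<le> B" using assms by auto
    have "\<bar>g t p\<bar> \<le> B" for t
    proof -
      have "\<bar>g t p\<bar> \<le> cmod (f t (fst p))"
        unfolding g_def using abs_Re_le_cmod[of "f t (fst p)"] abs_Im_le_cmod[of "f t (fst p)"]
        by (cases "snd p") simp_all
      thus ?thesis using B by (meson order_trans)
    qed
    thus ?thesis by blast
  qed
  have fin: "finite (I \<times> (UNIV::bool set))" using assms(1) by simp
  obtain r where r: "strict_mono r" "\<forall>p\<in>I \<times> (UNIV::bool set). convergent (\<lambda>t. g (r t) p)"
    using subseq_real[OF fin, of g] gb by blast
  have "\<exists>l. (\<lambda>t. f (r t) i) \<longlonglongrightarrow> l" if i: "i \<in> I" for i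
  proof -
    have "convergent (\<lambda>t. g (r t) (i, True))" using r(2) i by blast
    then obtain a where a: "(\<lambda>t. Re (f (r t) i)) \<longlonglongrightarrow> a"
      unfolding convergent_def g_def by auto
    have "convergent (\<lambda>t. g (r t) (i, False))" using r(2) i by blast
    then obtain b where b: "(\<lambda>t. Im (f (r t) i)) \<longlonglongrightarrow> b"
      unfolding convergent_def g_def by auto
    have "(\<lambda>t. Complex (Re (f (r t) i)) (Im (f (r t) i))) \<longlonglongrightarrow> Complex a b"
      by (intro tendsto_Complex a b)
    hence "(\<lambda>t. f (r t) i) \<longlonglongrightarrow> Complex a b" by (simp only: complex.collapse)
    thus ?thesis by blast
  qed
  thus ?thesis using r(1) by blast
qed


lemma vnorm_basic:
  assumes N: "is_vnorm d N" and x: "x \<in> carrier_vec d"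
  shows "0 \<le> N x" "N (0\<^sub>v d) = 0" "N x = 0 \<longleftrightarrow> x = 0\<^sub>v d" "N (a \<cdot>\<^sub>v x) = cmod a * N x"
  using N x unfolding is_vnorm_def by auto

lemma vnorm_add:
  assumes N: "is_vnorm d N" and x: "x \<in> carrier_vec d" and y: "y \<in> carrier_vec d"
  shows "N (x + y) \<le> N x + N y"
  using N x y unfolding is_vnorm_def by auto

lemma vnorm_sym:
  assumes N: "is_vnorm d N" and x: "x \<in> carrier_vec d" and y: "y \<in> carrier_vec d"
  shows "N (x - y) = N (y - x)"
proof -
  have "y - x = (-1) \<cdot>\<^sub>v (x - y)" using x y by (intro eq_vecI) auto
  hence "N (y - x) = cmod (-1) * N (x - y)" using vnorm_basic(4)[OF N, of "x - y" "-1"] x y by simp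
  thus ?thesis by simp
qed

lemma vnorm_tri:
  assumes N: "is_vnorm d N" and x: "x \<in> carrier_vec d" and y: "y \<in> carrier_vec d"
    and z: "z \<in> carrier_vec d"
  shows "N (x - z) \<le> N (x - y) + N (y - z)"
proof -
  have "x - z = (x - y) + (y - z)" using x y z by (intro eq_vecI) auto
  thus ?thesis using vnorm_add[OF N, of "x - y" "y - z"] x y z by simp
qed

lemma vnorm_upper:
  assumes N: "is_vnorm d N"
  shows "\<exists>K\<ge>0. \<forall>x\<in>carrier_vec d. N x \<le> K * (\<Sum>k<d. cmod (x $ k))"
proof -
  define K where "K = (\<Sum>k<d. N (unit_vec d k))"
  have Kn: "0 \<le> K" unfolding K_def using vnorm_basic(1)[OF N] by (intro sum_nonneg) auto
  have "N x \<le> K * (\<Sum>k<d. cmod (x $ k))" if x: "x \<in> carrier_vec d" for x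
  proof -
    define P where "P m = vec d (\<lambda>k. if k < m then x $ k else 0)" for m
    have Pc: "P m \<in> carrier_vec d" for m unfolding P_def by simp
    have ind: "m \<le> d \<Longrightarrow> N (P m) \<le> (\<Sum>k<m. cmod (x $ k) * N (unit_vec d k))" for m
    proof (induction m)
      case 0
      have "P 0 = 0\<^sub>v d" unfolding P_def by (intro eq_vecI) auto
      thus ?case using vnorm_basic(2)[OF N x] by simp
    next
      case (Suc m)
      have "P (Suc m) = P m + (x $ m) \<cdot>\<^sub>v unit_vec d m"
        unfolding P_def using Suc.prems by (intro eq_vecI) (auto simp: less_Suc_eq)
      hence "N (P (Suc m)) \<le> N (P m) + N ((x $ m) \<cdot>\<^sub>v unit_vec d m)"
        using vnorm_add[OF N Pc, of "(x $ m) \<cdot>\<^sub>v unit_vec d m"] by simp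
      also have "N ((x $ m) \<cdot>\<^sub>v unit_vec d m) = cmod (x $ m) * N (unit_vec d m)"
        using vnorm_basic(4)[OF N unit_vec_carrier] by simp
      finally show ?case using Suc by simp
    qed
    have "P d = x" unfolding P_def using x by (intro eq_vecI) auto
    hence "N x \<le> (\<Sum>k<d. cmod (x $ k) * N (unit_vec d k))" using ind[of d] by simp
    also have "\<dots> \<le> (\<Sum>k<d. cmod (x $ k) * K)"
    proof (intro sum_mono mult_left_mono)
      fix k assume "k \<in> {..<d}"
      thus "N (unit_vec d k) \<le> K" unfolding K_def
        using vnorm_basic(1)[OF N] by (intro member_le_sum) auto
    qed simp
    also have "\<dots> = K * (\<Sum>k<d. cmod (x $ k))" by (simp add: sum_distrib_left mult.commute)
    finally show ?thesis .
  qed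
  thus ?thesis using Kn by blast
qed


lemma vnorm_lower:
  assumes N: "is_vnorm d N"
  shows "\<exists>c>0. \<forall>x\<in>carrier_vec d. (\<Sum>k<d. cmod (x $ k)) \<le> c * N x"
proof (rule ccontr)
  define S where "S x = (\<Sum>k<d. cmod (x $ k))" for x :: "complex vec"
  assume "\<not> (\<exists>c>0. \<forall>x\<in>carrier_vec d. (\<Sum>k<d. cmod (x $ k)) \<le> c * N x)"
  hence neg: "\<forall>c>0. \<exists>x\<in>carrier_vec d. c * N x < S x" unfolding S_def by (auto simp: not_le)
  have "\<exists>y\<in>carrier_vec d. S y = 1 \<and> N y < 1 / (real m + 1)" for m
  proof -
    obtain x where x: "x \<in> carrier_vec d" "(real m + 1) * N x < S x" using neg[rule_format, of "real m + 1"] by auto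
    have Sp: "S x > 0" using x vnorm_basic(1)[OF N x(1)]
      by (smt (verit) mult_nonneg_nonneg of_nat_0_le_iff)
    define y where "y = complex_of_real (1 / S x) \<cdot>\<^sub>v x"
    have yc: "y \<in> carrier_vec d" unfolding y_def using x by simp
    have yk: "cmod (y $ k) = cmod (x $ k) / S x" if "k < d" for k
      unfolding y_def using x Sp that by (simp add: norm_divide)
    have "S y = (\<Sum>k<d. cmod (x $ k) / S x)" unfolding S_def[of y] using yk
      by (intro sum.cong) auto
    also have "\<dots> = S x / S x" unfolding S_def[of x] by (rule sum_divide_distrib[symmetric])
    finally have Sy: "S y = 1" using Sp by simp
    have "N y = N x / S x" unfolding y_def using vnorm_basic(4)[OF N x(1), of "complex_of_real (1 / S x)"] Sp by (simp add: norm_divide)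
    also have "\<dots> < 1 / (real m + 1)" using x(2) Sp by (simp add: field_simps)
    finally show ?thesis using yc Sy by blast
  qed
  then obtain y where y: "\<And>m. y m \<in> carrier_vec d" "\<And>m. S (y m) = 1" "\<And>m. N (y m) < 1 / (real m + 1)"
    by metis
  have bnd: "\<forall>k\<in>{..<d}. \<exists>B. \<forall>t. cmod (y t $ k) \<le> B"
  proof
    fix k assume k: "k \<in> {..<d}"
    have "cmod (y t $ k) \<le> 1" for t
      using y(2)[of t] unfolding S_def by (metis k finite_lessThan member_le_sum norm_ge_zero)
    thus "\<exists>B. \<forall>t. cmod (y t $ k) \<le> B" by blast
  qed
  obtain r where r: "strict_mono r" "\<forall>k\<in>{..<d}. \<exists>l. (\<lambda>t. y (r t) $ k) \<longlonglongrightarrow> l"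
    using subseq_complex[OF finite_lessThan bnd] by blast
  then obtain l where l: "\<And>k. k < d \<Longrightarrow> (\<lambda>t. y (r t) $ k) \<longlonglongrightarrow> l k"
    by (metis lessThan_iff)
  have dy: "dim_vec (y m) = d" for m using y(1)[of m] by auto
  define z where "z = vec d l"
  have zc: "z \<in> carrier_vec d" unfolding z_def by simp
  have Sdiff: "(\<lambda>t. S (z - y (r t))) \<longlonglongrightarrow> 0"
  proof -
    have "(\<lambda>t. \<Sum>k<d. cmod (l k - y (r t) $ k)) \<longlonglongrightarrow> (\<Sum>k<d. cmod (l k - l k))"
      by (intro tendsto_intros l) simp
    moreover have "S (z - y (r t)) = (\<Sum>k<d. cmod (l k - y (r t) $ k))" for t
      unfolding S_def z_def using dy by (intro sum.cong) auto
    ultimately show ?thesis by simp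
  qed
  have "(\<lambda>t. S (y (r t))) \<longlonglongrightarrow> S z"
  proof -
    have "(\<lambda>t. \<Sum>k<d. cmod (y (r t) $ k)) \<longlonglongrightarrow> (\<Sum>k<d. cmod (l k))"
      by (intro tendsto_intros l) simp
    moreover have "S z = (\<Sum>k<d. cmod (l k))" unfolding S_def z_def by simp
    ultimately show ?thesis unfolding S_def by simp
  qed
  hence Sz: "S z = 1" using y(2) by (simp add: LIMSEQ_const_iff)
  obtain K where K: "K \<ge> 0" "\<forall>x\<in>carrier_vec d. N x \<le> K * S x"
    using vnorm_upper[OF N] unfolding S_def by blast
  have bound: "N z \<le> K * S (z - y (r t)) + 1 / (real (r t) + 1)" for t
  proof -
    have "N z \<le> N (z - y (r t)) + N (y (r t))"
    proof -
      have "z = (z - y (r t)) + y (r t)" using zc dy by (intro eq_vecI) auto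
      hence "N z = N ((z - y (r t)) + y (r t))" by simp
      also have "\<dots> \<le> N (z - y (r t)) + N (y (r t))" using vnorm_add[OF N] zc y(1) by simp
      finally show ?thesis .
    qed
    moreover have "N (z - y (r t)) \<le> K * S (z - y (r t))" using K zc y(1) by simp
    moreover have "N (y (r t)) \<le> 1 / (real (r t) + 1)" using y(3) less_imp_le by blast
    ultimately show ?thesis by linarith
  qed
  have lim0: "(\<lambda>t. K * S (z - y (r t)) + 1 / (real (r t) + 1)) \<longlonglongrightarrow> 0"
  proof -
    have "(\<lambda>m. 1 / (real m + 1)) \<longlonglongrightarrow> 0"
      using LIMSEQ_inverse_real_of_nat by (simp add: inverse_eq_divide add.commute)
    from LIMSEQ_subseq_LIMSEQ[OF this r(1)] have "(\<lambda>t. 1 / (real (r t) + 1)) \<longlonglongrightarrow> 0"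
      by (simp add: comp_def)
    from tendsto_add[OF tendsto_mult[OF tendsto_const Sdiff] this] show ?thesis by simp
  qed
  have "N z \<le> 0" using bound by (intro LIMSEQ_le_const[OF lim0]) auto
  hence "N z = 0" using vnorm_basic(1)[OF N zc] by simp
  hence "z = 0\<^sub>v d" using vnorm_basic(3)[OF N zc] by simp
  hence "S z = 0" unfolding S_def by simp
  thus False using Sz by simp
qed


lemma mv_entry:
  assumes A: "A \<in> carrier_mat m n" and x: "x \<in> carrier_vec n" and k: "k < m"
  shows "(A *\<^sub>v x) $ k = (\<Sum>l<n. A $$ (k, l) * x $ l)"
  using A x k by (auto simp: scalar_prod_def lessThan_atLeast0 intro!: sum.cong)

lemma mv_sum_bound:
  fixes A :: "complex mat"
  assumes A: "A \<in> carrier_mat m n" and x: "x \<in> carrier_vec n"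
  shows "(\<Sum>k<m. cmod ((A *\<^sub>v x) $ k)) \<le> (\<Sum>k<m. \<Sum>l<n. cmod (A $$ (k, l))) * (\<Sum>l<n. cmod (x $ l))"
proof -
  have "(\<Sum>k<m. cmod ((A *\<^sub>v x) $ k)) \<le> (\<Sum>k<m. \<Sum>l<n. cmod (A $$ (k, l)) * cmod (x $ l))"
  proof (intro sum_mono)
    fix k assume "k \<in> {..<m}"
    hence "(A *\<^sub>v x) $ k = (\<Sum>l<n. A $$ (k, l) * x $ l)" using mv_entry[OF A x] by simp
    also have "cmod \<dots> \<le> (\<Sum>l<n. cmod (A $$ (k, l) * x $ l))" by (rule norm_sum)
    finally show "cmod ((A *\<^sub>v x) $ k) \<le> (\<Sum>l<n. cmod (A $$ (k, l)) * cmod (x $ l))"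
      by (simp add: norm_mult)
  qed
  also have "\<dots> \<le> (\<Sum>k<m. \<Sum>l<n. cmod (A $$ (k, l)) * (\<Sum>l'<n. cmod (x $ l')))"
    by (intro sum_mono mult_left_mono member_le_sum) auto
  also have "\<dots> = (\<Sum>k<m. \<Sum>l<n. cmod (A $$ (k, l))) * (\<Sum>l<n. cmod (x $ l))"
    by (simp add: sum_distrib_right)
  finally show ?thesis .
qed

lemma op_norm_bdd:
  assumes N: "is_vnorm d N" and A: "(A::complex mat) \<in> carrier_mat d d"
  shows "bdd_above ((\<lambda>x. N (A *\<^sub>v x)) ` {x\<in>carrier_vec d. N x \<le> 1})"
proof -
  obtain K where K: "K \<ge> 0" "\<forall>x\<in>carrier_vec d. N x \<le> K * (\<Sum>k<d. cmod (x $ k))"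
    using vnorm_upper[OF N] by blast
  obtain c where c: "c > 0" "\<forall>x\<in>carrier_vec d. (\<Sum>k<d. cmod (x $ k)) \<le> c * N x"
    using vnorm_lower[OF N] by blast
  define M where "M = (\<Sum>k<d. \<Sum>l<d. cmod (A $$ (k, l)))"
  have M: "M \<ge> 0" unfolding M_def by (intro sum_nonneg) auto
  have "N (A *\<^sub>v x) \<le> K * M * c" if x: "x \<in> carrier_vec d" "N x \<le> 1" for x
  proof -
    have Ax: "A *\<^sub>v x \<in> carrier_vec d" using A x by simp
    have "N (A *\<^sub>v x) \<le> K * (\<Sum>k<d. cmod ((A *\<^sub>v x) $ k))" using K Ax by blast
    also have "\<dots> \<le> K * (M * (\<Sum>l<d. cmod (x $ l)))"
      using mv_sum_bound[OF A x(1)] K(1) unfolding M_def by (intro mult_left_mono) auto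
    also have "\<dots> \<le> K * (M * (c * N x))"
      using c x K(1) M by (intro mult_left_mono) auto
    also have "\<dots> \<le> K * (M * (c * 1))"
      using c x K(1) M by (intro mult_left_mono) auto
    finally show ?thesis by simp
  qed
  thus ?thesis by (intro bdd_aboveI2) blast
qed

lemma op_norm_ge:
  assumes N: "is_vnorm d N" and A: "(A::complex mat) \<in> carrier_mat d d"
    and x: "x \<in> carrier_vec d" "N x \<le> 1"
  shows "N (A *\<^sub>v x) \<le> op_norm d N A"
  unfolding op_norm_def using op_norm_bdd[OF N A] x by (intro cSUP_upper) auto

lemma eigen_le_op:
  assumes N: "is_vnorm d N" and A: "(A::complex mat) \<in> carrier_mat d d"
    and v: "v \<in> carrier_vec d" "v \<noteq> 0\<^sub>v d" and ev: "A *\<^sub>v v = \<mu> \<cdot>\<^sub>v v"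
  shows "cmod \<mu> \<le> op_norm d N A"
proof -
  have Np: "N v > 0" using vnorm_basic[OF N v(1)] v(2) by auto
  define w where "w = complex_of_real (1 / N v) \<cdot>\<^sub>v v"
  have wc: "w \<in> carrier_vec d" unfolding w_def using v by simp
  have Nw: "N w = 1" unfolding w_def using vnorm_basic(4)[OF N v(1)] Np by (simp add: norm_divide)
  have "A *\<^sub>v w = \<mu> \<cdot>\<^sub>v w" unfolding w_def using mult_mat_vec[OF A v(1)] ev v(1)
    by (auto simp: smult_smult_assoc mult.commute)
  hence "N (A *\<^sub>v w) = cmod \<mu>" using vnorm_basic(4)[OF N wc] Nw by simp
  thus ?thesis using op_norm_ge[OF N A wc] Nw by simp
qed




lemma mat_inv_props:
  assumes A: "A \<in> carrier_mat n n" and inv: "invertible_mat (A::complex mat)"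
  shows "mat_inv A \<in> carrier_mat n n" "A * mat_inv A = 1\<^sub>m n" "mat_inv A * A = 1\<^sub>m n"
proof -
  from inv obtain B where AB: "A * B = 1\<^sub>m (dim_row A)" and BA: "B * A = 1\<^sub>m (dim_row B)"
    unfolding invertible_mat_def inverts_mat_def by blast
  have dB: "B \<in> carrier_mat n n"
  proof -
    have "dim_col B = n" using arg_cong[OF AB, of dim_col] A by auto
    moreover have "dim_row B = n" using arg_cong[OF BA, of dim_col] A by auto
    ultimately show ?thesis by auto
  qed
  have "B \<in> carrier_mat (dim_row A) (dim_row A) \<and> A * B = 1\<^sub>m (dim_row A) \<and> B * A = 1\<^sub>m (dim_row A)"
    using AB BA dB A by auto
  hence P: "mat_inv A \<in> carrier_mat (dim_row A) (dim_row A) \<and> A * mat_inv A = 1\<^sub>m (dim_row A) \<and> mat_inv A * A = 1\<^sub>m (dim_row A)"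
    unfolding mat_inv_def by (rule someI)
  thus "mat_inv A \<in> carrier_mat n n" "A * mat_inv A = 1\<^sub>m n" "mat_inv A * A = 1\<^sub>m n" using A by auto
qed


locale cascade =
  fixes n :: nat and d :: "nat \<Rightarrow> nat" and L V C :: "nat \<Rightarrow> complex mat"
    and lam :: "nat \<Rightarrow> nat \<Rightarrow> complex"
  assumes L_dim: "\<forall>i\<in>{1..n}. L i \<in> carrier_mat (d i) (d i)"
    and C_dim: "\<forall>i\<in>{2..n}. C i \<in> carrier_mat (d i) (d (i - 1))"
    and V_dim: "\<forall>i\<in>{1..n}. V i \<in> carrier_mat (d i) (d i)"
    and L_inv: "\<forall>i\<in>{1..n}. invertible_mat (L i)"
    and V_inv: "\<forall>i\<in>{1..n}. invertible_mat (V i)"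
    and diagonalize: "\<forall>i\<in>{1..n}. L i * V i = V i * mat_diag (d i) (lam i)"
    and spec_disj: "\<forall>i\<in>{1..n}. \<forall>j\<in>{1..n}. i \<noteq> j \<longrightarrow> spectrum (L i) \<inter> spectrum (L j) = {}"
begin

lemma Lc: "i \<in> {1..n} \<Longrightarrow> L i \<in> carrier_mat (d i) (d i)" using L_dim by blast
lemma Vc: "i \<in> {1..n} \<Longrightarrow> V i \<in> carrier_mat (d i) (d i)" using V_dim by blast
lemma Cc: "i \<in> {2..n} \<Longrightarrow> C i \<in> carrier_mat (d i) (d (i - 1))" using C_dim by blast

lemma Linv: assumes "i \<in> {1..n}"
  shows "mat_inv (L i) \<in> carrier_mat (d i) (d i)" "L i * mat_inv (L i) = 1\<^sub>m (d i)"
    "mat_inv (L i) * L i = 1\<^sub>m (d i)"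
  using mat_inv_props[OF Lc[OF assms]] L_inv assms by auto

lemma Vinv: assumes "i \<in> {1..n}"
  shows "mat_inv (V i) \<in> carrier_mat (d i) (d i)" "V i * mat_inv (V i) = 1\<^sub>m (d i)"
    "mat_inv (V i) * V i = 1\<^sub>m (d i)"
  using mat_inv_props[OF Vc[OF assms]] V_inv assms by auto

lemma colV_nz: assumes i: "i \<in> {1..n}" and m: "m < d i"
  shows "col (V i) m \<noteq> 0\<^sub>v (d i)"
proof
  assume z: "col (V i) m = 0\<^sub>v (d i)"
  have "col (mat_inv (V i) * V i) m = mat_inv (V i) *\<^sub>v col (V i) m"
    by (rule col_mult2[OF Vinv(1)[OF i] Vc[OF i] m])
  also have "\<dots> = 0\<^sub>v (d i)" unfolding z using Vinv(1)[OF i] by (intro eq_vecI) auto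
  finally have "col (mat_inv (V i) * V i) m = 0\<^sub>v (d i)" .
  hence "col (1\<^sub>m (d i) :: complex mat) m = 0\<^sub>v (d i)" by (simp only: Vinv(3)[OF i])
  hence "unit_vec (d i) m = (0\<^sub>v (d i) :: complex vec)" using m by simp
  hence "unit_vec (d i) m $ m = (0\<^sub>v (d i) :: complex vec) $ m" by simp
  thus False using m by simp
qed

lemma colV_eig: assumes i: "i \<in> {1..n}" and m: "m < d i"
  shows "L i *\<^sub>v col (V i) m = lam i m \<cdot>\<^sub>v col (V i) m"
proof -
  have "L i *\<^sub>v col (V i) m = col (L i * V i) m" by (rule col_mult2[OF Lc[OF i] Vc[OF i] m, symmetric])
  also have "\<dots> = col (V i * mat_diag (d i) (lam i)) m" using diagonalize i by simp
  also have "\<dots> = lam i m \<cdot>\<^sub>v col (V i) m"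
    unfolding mat_diag_mult_right[OF Vc[OF i]] using Vc[OF i] m by (intro eq_vecI) auto
  finally show ?thesis .
qed

lemma lam_spec: assumes i: "i \<in> {1..n}" and m: "m < d i"
  shows "lam i m \<in> spectrum (L i)"
proof -
  have "eigenvector (L i) (col (V i) m) (lam i m)"
    unfolding eigenvector_def using colV_eig[OF i m] colV_nz[OF i m] Lc[OF i] Vc[OF i] m by auto
  thus ?thesis unfolding spectrum_def eigenvalue_def by blast
qed

lemma lam_nz: assumes i: "i \<in> {1..n}" and m: "m < d i"
  shows "lam i m \<noteq> 0"
proof
  assume z: "lam i m = 0"
  have "mat_inv (L i) *\<^sub>v (L i *\<^sub>v col (V i) m) = col (V i) m"
  proof -
    have cv: "col (V i) m \<in> carrier_vec (d i)" using Vc[OF i] m by simp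
    have "mat_inv (L i) *\<^sub>v (L i *\<^sub>v col (V i) m) = (mat_inv (L i) * L i) *\<^sub>v col (V i) m"
      using assoc_mult_mat_vec[OF Linv(1)[OF i] Lc[OF i] cv] by simp
    also have "\<dots> = col (V i) m" using Linv(3)[OF i] cv by simp
    finally show ?thesis .
  qed
  moreover have "L i *\<^sub>v col (V i) m = 0\<^sub>v (d i)"
    using colV_eig[OF i m] z Vc[OF i] m by (intro eq_vecI) auto
  moreover have "mat_inv (L i) *\<^sub>v 0\<^sub>v (d i) = 0\<^sub>v (d i)"
    using Linv(1)[OF i] by (intro eq_vecI) auto
  ultimately have "col (V i) m = 0\<^sub>v (d i)" by simp
  thus False using colV_nz[OF i m] by simp
qed

lemma lam_ne: assumes i: "i \<in> {1..n}" and j: "j \<in> {1..n}" and ij: "i \<noteq> j"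
  and l: "l < d i" and m: "m < d j"
  shows "lam i l \<noteq> lam j m"
proof
  assume e: "lam i l = lam j m"
  have "spectrum (L i) \<inter> spectrum (L j) = {}" using spec_disj i j ij by blast
  moreover have "lam i l \<in> spectrum (L i) \<inter> spectrum (L j)"
    using lam_spec[OF i l] lam_spec[OF j m] e by simp
  ultimately show False by simp
qed

definition Mm where "Mm i j = mat_inv (V i) * C i * Dmat d L C V lam (i - 1) j * V j"
definition Ctm where "Ctm i j = mat (d i) (d j) (\<lambda>(l, m). Mm i j $$ (l, m) / (1 - lam j m / lam i l))"

lemma Dmat_diag: "Dmat d L C V lam i i = 1\<^sub>m (d i)"
  by (cases i) auto

lemma Dmat_Suc: "j \<noteq> Suc k \<Longrightarrow>
  Dmat d L C V lam (Suc k) j = mat_inv (L (Suc k)) * V (Suc k) * Ctm (Suc k) j * mat_inv (V j)"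
  unfolding Ctm_def Mm_def by (simp add: Let_def)

lemma Dmat_dim: assumes "1 \<le> j" "j \<le> i" "i \<le> n"
  shows "Dmat d L C V lam i j \<in> carrier_mat (d i) (d j)"
proof (cases "j = i")
  case True thus ?thesis by (simp add: Dmat_diag)
next
  case False
  then obtain k where k: "i = Suc k" using assms by (cases i) auto
  have i: "i \<in> {1..n}" and j: "j \<in> {1..n}" using assms by auto
  have "mat_inv (L i) * V i * Ctm i j * mat_inv (V j) \<in> carrier_mat (d i) (d j)"
    using Linv(1)[OF i] Vc[OF i] Vinv(1)[OF j] unfolding Ctm_def
    by (intro mult_carrier_mat[of _ _ "d j"] mult_carrier_mat[of _ _ "d i"]) auto
  thus ?thesis using Dmat_Suc[of j k] False k by simp
qed

lemma sylvester:
  assumes i: "i \<in> {2..n}" and j: "j \<in> {1..n}" and ji: "j < i"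
  shows "L i * Dmat d L C V lam i j = Dmat d L C V lam i j * L j + C i * Dmat d L C V lam (i - 1) j"
proof -
  have i1: "i \<in> {1..n}" using i by auto
  define Li where "Li = L i"
  define Li' where "Li' = mat_inv (L i)"
  define Vi where "Vi = V i"
  define Vi' where "Vi' = mat_inv (V i)"
  define Lj where "Lj = L j"
  define Vj where "Vj = V j"
  define Vj' where "Vj' = mat_inv (V j)"
  define Ci where "Ci = C i"
  define D' where "D' = Dmat d L C V lam (i - 1) j"
  define D where "D = Dmat d L C V lam i j"
  define Ct where "Ct = Ctm i j"
  define M where "M = Mm i j"
  define Ai where "Ai = mat_diag (d i) (\<lambda>l. 1 / lam i l)"
  define Aj where "Aj = mat_diag (d j) (lam j)"
  define Li0 where "Li0 = mat_diag (d i) (lam i)"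
  have cLi: "Li \<in> carrier_mat (d i) (d i)" unfolding Li_def using Lc[OF i1] .
  have cLi': "Li' \<in> carrier_mat (d i) (d i)" unfolding Li'_def using Linv(1)[OF i1] .
  have cVi: "Vi \<in> carrier_mat (d i) (d i)" unfolding Vi_def using Vc[OF i1] .
  have cVi': "Vi' \<in> carrier_mat (d i) (d i)" unfolding Vi'_def using Vinv(1)[OF i1] .
  have cLj: "Lj \<in> carrier_mat (d j) (d j)" unfolding Lj_def using Lc[OF j] .
  have cVj: "Vj \<in> carrier_mat (d j) (d j)" unfolding Vj_def using Vc[OF j] .
  have cVj': "Vj' \<in> carrier_mat (d j) (d j)" unfolding Vj'_def using Vinv(1)[OF j] .
  have cCi: "Ci \<in> carrier_mat (d i) (d (i - 1))" unfolding Ci_def using Cc[OF i] .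
  have cD': "D' \<in> carrier_mat (d (i - 1)) (d j)" unfolding D'_def using j ji i
    by (intro Dmat_dim) auto
  have cCt: "Ct \<in> carrier_mat (d i) (d j)" unfolding Ct_def Ctm_def by simp
  have cAi: "Ai \<in> carrier_mat (d i) (d i)" unfolding Ai_def by simp
  have cAj: "Aj \<in> carrier_mat (d j) (d j)" unfolding Aj_def by simp
  have cLi0: "Li0 \<in> carrier_mat (d i) (d i)" unfolding Li0_def by simp
  have cM: "M \<in> carrier_mat (d i) (d j)" unfolding M_def Mm_def
    using cVi' cCi cD' cVj unfolding Vi'_def Ci_def D'_def Vj_def
    by (intro mult_carrier_mat[of _ _ "d j"] mult_carrier_mat[of _ _ "d (i - 1)"] mult_carrier_mat[of _ _ "d i"]) auto
  have ViVi': "Vi * Vi' = 1\<^sub>m (d i)" unfolding Vi_def Vi'_def using Vinv(2)[OF i1] .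
  have VjVj': "Vj * Vj' = 1\<^sub>m (d j)" unfolding Vj_def Vj'_def using Vinv(2)[OF j] .
  have Vj'Vj: "Vj' * Vj = 1\<^sub>m (d j)" unfolding Vj_def Vj'_def using Vinv(3)[OF j] .
  have LiLi': "Li * Li' = 1\<^sub>m (d i)" unfolding Li_def Li'_def using Linv(2)[OF i1] .
  have Li'Li: "Li' * Li = 1\<^sub>m (d i)" unfolding Li_def Li'_def using Linv(3)[OF i1] .
  have diagi: "Li * Vi = Vi * Li0" unfolding Li_def Vi_def Li0_def using diagonalize i1 by blast
  have diagj: "Lj * Vj = Vj * Aj" unfolding Lj_def Vj_def Aj_def using diagonalize j by blast
  have D: "D = Li' * Vi * Ct * Vj'"
  proof -
    obtain k where k: "i = Suc k" using i by (cases i) auto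
    show ?thesis unfolding D_def Li'_def Vi_def Ct_def Vj'_def
      using Dmat_Suc[of j k] ji k by simp
  qed
  have F1: "Vj' * Lj = Aj * Vj'"
  proof -
    have "Vj' * Lj = (Vj' * Lj) * (Vj * Vj')" using cVj' cLj VjVj' by simp
    also have "\<dots> = ((Vj' * Lj) * Vj) * Vj'" using cVj' cLj cVj by (simp add: assoc_mult_mat[of _ "d j" "d j" _ "d j" _ "d j"])
    also have "(Vj' * Lj) * Vj = Vj' * (Lj * Vj)" using cVj' cLj cVj by simp
    also have "\<dots> = (Vj' * Vj) * Aj" unfolding diagj using cVj' cAj cVj by simp
    also have "\<dots> = Aj" using Vj'Vj cAj by simp
    finally show ?thesis .
  qed
  have AA: "Li0 * Ai = 1\<^sub>m (d i)"
    unfolding Li0_def Ai_def mat_diag_diag using lam_nz[OF i1]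
    by (intro eq_matI) (auto simp: mat_diag_def)
  have F2: "Li' * Vi = Vi * Ai"
  proof -
    have "Vi * Ai = (Li' * Li) * (Vi * Ai)" using Li'Li cVi cAi by simp
    also have "\<dots> = Li' * (Li * (Vi * Ai))" by (rule assoc_mult_mat[OF cLi' cLi mult_carrier_mat[OF cVi cAi]])
    also have "Li * (Vi * Ai) = (Li * Vi) * Ai" using cLi cVi cAi by simp
    also have "\<dots> = Vi * (Li0 * Ai)" unfolding diagi using cVi cLi0 cAi by simp
    also have "\<dots> = Vi" using AA cVi by simp
    finally show ?thesis by simp
  qed
  define X where "X = (Ai * Ct) * Aj"
  have cX: "X \<in> carrier_mat (d i) (d j)" unfolding X_def using cAi cCt cAj by simp
  have F3: "Ct = X + M"
  proof (rule eq_matI)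
    fix l m assume l: "l < dim_row (X + M)" and m: "m < dim_col (X + M)"
    hence l: "l < d i" and m: "m < d j" using cX cM by auto
    have X: "X $$ (l, m) = 1 / lam i l * Ct $$ (l, m) * lam j m"
      unfolding X_def Ai_def Aj_def using cCt l m
      by (simp add: mat_diag_mult_left[OF cCt] mat_diag_mult_right[of _ "d i"])
    have ln: "lam i l \<noteq> 0" using lam_nz[OF i1 l] .
    have ne: "lam i l \<noteq> lam j m" using lam_ne[OF i1 j _ l m] ji by simp
    have "1 - lam j m / lam i l \<noteq> 0" using ln ne by (simp add: field_simps)
    moreover have "Ct $$ (l, m) = M $$ (l, m) / (1 - lam j m / lam i l)"
      unfolding Ct_def Ctm_def M_def using l m by simp
    ultimately have e1: "lam i l * Ct $$ (l, m) = lam i l * M $$ (l, m) + lam j m * Ct $$ (l, m)"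
      using ln by (simp add: field_simps)
    have e2: "lam i l * X $$ (l, m) = lam j m * Ct $$ (l, m)" using X ln by (simp add: field_simps)
    have "lam i l * Ct $$ (l, m) = lam i l * (X $$ (l, m) + M $$ (l, m))"
      using e1 e2 by (simp add: distrib_left)
    hence "Ct $$ (l, m) = X $$ (l, m) + M $$ (l, m)" using ln by simp
    thus "Ct $$ (l, m) = (X + M) $$ (l, m)" using l m cX cM by simp
  qed (use cX cM cCt in auto)
  have F4: "(Vi * M) * Vj' = Ci * D'"
  proof -
    have M: "M = ((Vi' * Ci) * D') * Vj" unfolding M_def Mm_def Vi'_def Ci_def D'_def Vj_def ..
    have "Vi * M = (Vi * ((Vi' * Ci) * D')) * Vj" unfolding M
      using cVi cVi' cCi cD' cVj by (simp add: assoc_mult_mat[of _ "d i" "d i" _ "d j" _ "d j"])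
    also have "Vi * ((Vi' * Ci) * D') = (Vi * (Vi' * Ci)) * D'" using cVi cVi' cCi cD'
      by (simp add: assoc_mult_mat[of _ "d i" "d i" _ "d (i - 1)" _ "d j"])
    also have "Vi * (Vi' * Ci) = (Vi * Vi') * Ci" using cVi cVi' cCi by simp
    also have "\<dots> = Ci" using ViVi' cCi by simp
    finally have "Vi * M = (Ci * D') * Vj" .
    hence "(Vi * M) * Vj' = ((Ci * D') * Vj) * Vj'" by simp
    also have "\<dots> = (Ci * D') * (Vj * Vj')" by (rule assoc_mult_mat[OF mult_carrier_mat[OF cCi cD'] cVj cVj'])
    also have "\<dots> = Ci * D'" using VjVj' cCi cD' by simp
    finally show ?thesis .
  qed
  have LiD: "Li * D = (Vi * Ct) * Vj'"
  proof -
    have "Li * D = (Li * ((Li' * Vi) * Ct)) * Vj'" unfolding D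
      using cLi cLi' cVi cCt cVj' by (simp add: assoc_mult_mat[of _ "d i" "d i" _ "d j" _ "d j"])
    also have "Li * ((Li' * Vi) * Ct) = (Li * (Li' * Vi)) * Ct"
      by (rule assoc_mult_mat[OF cLi mult_carrier_mat[OF cLi' cVi] cCt, symmetric])
    also have "Li * (Li' * Vi) = (Li * Li') * Vi" by (rule assoc_mult_mat[OF cLi cLi' cVi, symmetric])
    also have "\<dots> = Vi" using LiLi' cVi by simp
    finally show ?thesis .
  qed
  have DLj: "D * Lj = (Vi * X) * Vj'"
  proof -
    have "D * Lj = ((Li' * Vi) * Ct) * (Vj' * Lj)" unfolding D
      using cLi' cVi cCt cVj' cLj by (simp add: assoc_mult_mat[of _ "d i" "d j" _ "d j" _ "d j"])
    also have "\<dots> = (((Li' * Vi) * Ct) * Aj) * Vj'" unfolding F1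
      using cLi' cVi cCt cVj' cAj by (simp add: assoc_mult_mat[of _ "d i" "d j" _ "d j" _ "d j"])
    also have "((Li' * Vi) * Ct) * Aj = Vi * X" unfolding F2 X_def
    proof -
      have "((Vi * Ai) * Ct) * Aj = (Vi * (Ai * Ct)) * Aj"
        using assoc_mult_mat[OF cVi cAi cCt] by simp
      also have "\<dots> = Vi * ((Ai * Ct) * Aj)"
        by (rule assoc_mult_mat[OF cVi mult_carrier_mat[OF cAi cCt] cAj])
      finally show "((Vi * Ai) * Ct) * Aj = Vi * ((Ai * Ct) * Aj)" .
    qed
    finally show ?thesis .
  qed
  have "Li * D = (Vi * (X + M)) * Vj'" using LiD F3 by simp
  also have "\<dots> = (Vi * X + Vi * M) * Vj'" using cVi cX cM by (simp add: mult_add_distrib_mat)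
  also have "\<dots> = (Vi * X) * Vj' + (Vi * M) * Vj'" using cVi cX cM cVj'
    by (intro add_mult_distrib_mat[of _ "d i" "d j"]) auto
  also have "\<dots> = D * Lj + Ci * D'" using DLj F4 by simp
  finally show ?thesis unfolding Li_def D_def Lj_def Ci_def D'_def .
qed

end




lemma foldr_vec:
  fixes g :: "nat \<Rightarrow> complex vec"
  assumes "\<forall>j\<in>set js. g j \<in> carrier_vec m" "v \<in> carrier_vec m"
  shows "foldr (\<lambda>j acc. acc + g j) js v \<in> carrier_vec m \<and>
         (\<forall>k<m. foldr (\<lambda>j acc. acc + g j) js v $ k = v $ k + sum_list (map (\<lambda>j. g j $ k) js))"
  using assms
proof (induction js)
  case Nil thus ?case by simp
next
  case (Cons a js)
  define F where "F = foldr (\<lambda>j acc. acc + g j) js v"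
  have ga: "g a \<in> carrier_vec m" using Cons.prems by simp
  have IH: "F \<in> carrier_vec m" "\<forall>k<m. F $ k = v $ k + sum_list (map (\<lambda>j. g j $ k) js)"
    using Cons unfolding F_def by auto
  have e: "foldr (\<lambda>j acc. acc + g j) (a # js) v = F + g a" unfolding F_def by simp
  have "(F + g a) $ k = v $ k + sum_list (map (\<lambda>j. g j $ k) (a # js))" if k: "k < m" for k
  proof -
    have "(F + g a) $ k = F $ k + g a $ k" using ga k by simp
    also have "\<dots> = v $ k + sum_list (map (\<lambda>j. g j $ k) js) + g a $ k" using IH k by simp
    also have "\<dots> = v $ k + (g a $ k + sum_list (map (\<lambda>j. g j $ k) js))" by (simp only: add_ac)
    finally show ?thesis by simp
  qed
  thus ?case unfolding e using IH ga by simp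
qed

lemma mv_lin:
  fixes A :: "complex mat"
  assumes A: "A \<in> carrier_mat m q" and w: "w \<in> carrier_vec q"
    and w': "\<forall>j\<in>J. w' j \<in> carrier_vec q" and fin: "finite J"
    and eq: "\<forall>l<q. w $ l = (\<Sum>j\<in>J. c j * w' j $ l)" and k: "k < m"
  shows "(A *\<^sub>v w) $ k = (\<Sum>j\<in>J. c j * (A *\<^sub>v w' j) $ k)"
proof -
  have "(A *\<^sub>v w) $ k = (\<Sum>l<q. A $$ (k, l) * (\<Sum>j\<in>J. c j * w' j $ l))"
    using mv_entry[OF A w k] eq by simp
  also have "\<dots> = (\<Sum>j\<in>J. c j * (\<Sum>l<q. A $$ (k, l) * w' j $ l))"
  proof -
    have "(\<Sum>l<q. A $$ (k, l) * (\<Sum>j\<in>J. c j * w' j $ l)) = (\<Sum>l<q. \<Sum>j\<in>J. c j * (A $$ (k, l) * w' j $ l))"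
      by (simp add: sum_distrib_left mult.left_commute)
    also have "\<dots> = (\<Sum>j\<in>J. \<Sum>l<q. c j * (A $$ (k, l) * w' j $ l))" by (rule sum.swap)
    also have "\<dots> = (\<Sum>j\<in>J. c j * (\<Sum>l<q. A $$ (k, l) * w' j $ l))" by (simp add: sum_distrib_left)
    finally show ?thesis .
  qed
  also have "\<dots> = (\<Sum>j\<in>J. c j * (A *\<^sub>v w' j) $ k)"
    using mv_entry[OF A _ k] w' by simp
  finally show ?thesis .
qed

declare Dmat.simps[simp del]

context cascade begin

abbreviation "DD \<equiv> Dmat d L C V lam"
abbreviation "PV x \<equiv> pert_vals d L C V lam x"

lemma PV_stable: "1 \<le> j \<Longrightarrow> j \<le> k \<Longrightarrow> PV x k j = PV x j j"
proof (induction k)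
  case 0 thus ?case by simp
next
  case (Suc k)
  show ?case
  proof (cases "j = Suc k")
    case True thus ?thesis by simp
  next
    case False
    hence "PV x (Suc k) j = PV x k j" by (simp only: pert_vals.simps(2) fun_upd_apply if_False)
    thus ?thesis using Suc False by simp
  qed
qed

lemma PV_Suc: "PV x (Suc k) (Suc k) =
   foldr (\<lambda>j acc. acc + ((-1) ^ (k - j)) \<cdot>\<^sub>v (DD (Suc k) j *\<^sub>v PV x j j)) [1..<Suc k] (x (Suc k))"
proof -
  have "PV x (Suc k) (Suc k) =
   foldr (\<lambda>j acc. acc + ((-1) ^ (k - j)) \<cdot>\<^sub>v (DD (Suc k) j *\<^sub>v PV x k j)) [1..<Suc k] (x (Suc k))"
    by (simp only: pert_vals.simps(2) fun_upd_same)
  also have "\<dots> = foldr (\<lambda>j acc. acc + ((-1) ^ (k - j)) \<cdot>\<^sub>v (DD (Suc k) j *\<^sub>v PV x j j)) [1..<Suc k] (x (Suc k))"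
  proof (intro foldr_cong refl)
    fix j acc assume "j \<in> set [1..<Suc k]"
    hence "1 \<le> j" "j \<le> k" by auto
    hence "PV x k j = PV x j j" by (rule PV_stable)
    thus "acc + ((-1) ^ (k - j)) \<cdot>\<^sub>v (DD (Suc k) j *\<^sub>v PV x k j) =
          acc + ((-1) ^ (k - j)) \<cdot>\<^sub>v (DD (Suc k) j *\<^sub>v PV x j j)" by simp
  qed
  finally show ?thesis .
qed

lemma pert_coord:
  assumes x: "x \<in> state_space n d" and i: "i \<in> {1..n}"
  shows "PV x i i \<in> carrier_vec (d i) \<and>
    (\<forall>k<d i. PV x i i $ k = x i $ k + (\<Sum>j\<in>{1..<i}. (-1) ^ (i - 1 - j) * (DD i j *\<^sub>v PV x j j) $ k))"
  using i
proof (induction i rule: less_induct)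
  case (less i)
  then obtain k where k: "i = Suc k" by (cases i) auto
  have xi: "x i \<in> carrier_vec (d i)" using x less.prems unfolding state_space_def by auto
  define g where "g j = ((-1) ^ (k - j)) \<cdot>\<^sub>v (DD (Suc k) j *\<^sub>v PV x j j)" for j
  have gc: "\<forall>j\<in>set [1..<Suc k]. g j \<in> carrier_vec (d i)"
  proof
    fix j assume "j \<in> set [1..<Suc k]"
    hence j: "1 \<le> j" "j < i" using k by auto
    have "PV x j j \<in> carrier_vec (d j)" using less.IH[of j] j less.prems by auto
    moreover have "DD i j \<in> carrier_mat (d i) (d j)" using Dmat_dim[of j i] j less.prems by auto
    ultimately show "g j \<in> carrier_vec (d i)" unfolding g_def using k by simp
  qed
  have F: "PV x i i = foldr (\<lambda>j acc. acc + g j) [1..<Suc k] (x (Suc k))"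
    unfolding g_def k by (rule PV_Suc)
  from foldr_vec[OF gc, of "x (Suc k)"] xi k
  have R: "PV x i i \<in> carrier_vec (d i)"
     "\<forall>l<d i. PV x i i $ l = x i $ l + sum_list (map (\<lambda>j. g j $ l) [1..<Suc k])"
    unfolding F by auto
  have "PV x i i $ l = x i $ l + (\<Sum>j\<in>{1..<i}. (-1) ^ (i - 1 - j) * (DD i j *\<^sub>v PV x j j) $ l)"
    if l: "l < d i" for l
  proof -
    have "sum_list (map (\<lambda>j. g j $ l) [1..<Suc k]) = (\<Sum>j\<in>{1..<i}. g j $ l)"
      using k by (simp only: sum_list_distinct_conv_sum_set distinct_upt set_upt)
    also have "\<dots> = (\<Sum>j\<in>{1..<i}. (-1) ^ (i - 1 - j) * (DD i j *\<^sub>v PV x j j) $ l)"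
    proof (intro sum.cong refl)
      fix j assume "j \<in> {1..<i}"
      hence j: "1 \<le> j" "j < i" by auto
      have "DD i j \<in> carrier_mat (d i) (d j)" using Dmat_dim[of j i] j less.prems by auto
      thus "g j $ l = (-1) ^ (i - 1 - j) * (DD i j *\<^sub>v PV x j j) $ l"
        unfolding g_def using k l by simp
    qed
    finally show ?thesis using R(2) l by simp
  qed
  thus ?case using R(1) by blast
qed

abbreviation "LM \<equiv> Lin_map n L C"
abbreviation "NM \<equiv> Nom_map n L"
abbreviation "PM \<equiv> pert_map n d L C V lam"

lemma ssD: "x \<in> state_space n d \<Longrightarrow> i \<in> {1..n} \<Longrightarrow> x i \<in> carrier_vec (d i)"
  unfolding state_space_def by auto

lemma ss_LM: assumes x: "x \<in> state_space n d" shows "LM x \<in> state_space n d"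
proof -
  have "LM x i \<in> carrier_vec (d i)" if i: "i \<in> {1..n}" for i
  proof (cases "i = 1")
    case True thus ?thesis using Lc[OF i] ssD[OF x i] i unfolding Lin_map_def by auto
  next
    case False
    hence i2: "i \<in> {2..n}" using i by auto
    have "i - 1 \<in> {1..n}" using i2 by auto
    thus ?thesis using Lc[OF i] Cc[OF i2] ssD[OF x i] ssD[OF x] i2 False unfolding Lin_map_def by auto
  qed
  moreover have "LM x i = vec 0 (\<lambda>_. 0)" if "i \<notin> {1..n}" for i
    using x that unfolding state_space_def Lin_map_def by auto
  ultimately show ?thesis unfolding state_space_def by blast
qed

lemma ss_NM: assumes x: "x \<in> state_space n d" shows "NM x \<in> state_space n d"
proof -
  have "NM x i \<in> carrier_vec (d i)" if i: "i \<in> {1..n}" for i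
    using Lc[OF i] ssD[OF x i] i unfolding Nom_map_def by auto
  moreover have "NM x i = vec 0 (\<lambda>_. 0)" if "i \<notin> {1..n}" for i
    using x that unfolding state_space_def Nom_map_def by auto
  ultimately show ?thesis unfolding state_space_def by blast
qed

lemma ss_PM: assumes x: "x \<in> state_space n d" shows "PM x \<in> state_space n d"
proof -
  have "PM x i \<in> carrier_vec (d i)" if i: "i \<in> {1..n}" for i
    using pert_coord[OF x i] i unfolding pert_map_def by auto
  moreover have "PM x i = vec 0 (\<lambda>_. 0)" if "i \<notin> {1..n}" for i
    using x that unfolding state_space_def pert_map_def by auto
  ultimately show ?thesis unfolding state_space_def by blast
qed

lemma ss_iter: assumes "\<And>y. y \<in> state_space n d \<Longrightarrow> f y \<in> state_space n d"
  and "x \<in> state_space n d" shows "(f ^^ t) x \<in> state_space n d"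
  using assms by (induction t) auto

lemma sylv_vec:
  assumes i: "i \<in> {2..n}" and j: "j \<in> {1..n}" and ji: "j < i" and v: "v \<in> carrier_vec (d j)"
    and k: "k < d i"
  shows "(DD i j *\<^sub>v (L j *\<^sub>v v)) $ k = (L i *\<^sub>v (DD i j *\<^sub>v v)) $ k - (C i *\<^sub>v (DD (i - 1) j *\<^sub>v v)) $ k"
proof -
  have i1: "i \<in> {1..n}" using i by auto
  have cD: "DD i j \<in> carrier_mat (d i) (d j)" using Dmat_dim[of j i] i j ji by auto
  have cD': "DD (i - 1) j \<in> carrier_mat (d (i - 1)) (d j)" using Dmat_dim[of j "i - 1"] i j ji by auto
  have "L i *\<^sub>v (DD i j *\<^sub>v v) = (L i * DD i j) *\<^sub>v v"
    using assoc_mult_mat_vec[OF Lc[OF i1] cD v] by simp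
  also have "\<dots> = (DD i j * L j + C i * DD (i - 1) j) *\<^sub>v v" using sylvester[OF i j ji] by simp
  also have "\<dots> = (DD i j * L j) *\<^sub>v v + (C i * DD (i - 1) j) *\<^sub>v v"
    using cD Lc[OF j] Cc[OF i] cD' v by (intro add_mult_distrib_mat_vec[of _ "d i" "d j"]) auto
  also have "(DD i j * L j) *\<^sub>v v = DD i j *\<^sub>v (L j *\<^sub>v v)"
    using assoc_mult_mat_vec[OF cD Lc[OF j] v] .
  also have "(C i * DD (i - 1) j) *\<^sub>v v = C i *\<^sub>v (DD (i - 1) j *\<^sub>v v)"
    using assoc_mult_mat_vec[OF Cc[OF i] cD' v] .
  finally have e: "L i *\<^sub>v (DD i j *\<^sub>v v) = DD i j *\<^sub>v (L j *\<^sub>v v) + C i *\<^sub>v (DD (i - 1) j *\<^sub>v v)" .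
  have "(L i *\<^sub>v (DD i j *\<^sub>v v)) $ k = (DD i j *\<^sub>v (L j *\<^sub>v v)) $ k + (C i *\<^sub>v (DD (i - 1) j *\<^sub>v v)) $ k"
    unfolding e using k Cc[OF i] by simp
  thus ?thesis by simp
qed

lemma sign_step: "j < i \<Longrightarrow> ((-1::complex) ^ (i - j)) = - ((-1) ^ (i - 1 - j))"
proof -
  assume "j < i"
  hence "i - j = Suc (i - 1 - j)" by simp
  thus ?thesis by simp
qed

lemma traj:
  assumes x: "x \<in> state_space n d"
  shows "\<forall>i\<in>{1..n}. \<forall>k<d i. (LM ^^ t) x i $ k =
           (\<Sum>j\<in>{1..i}. (-1) ^ (i - j) * (DD i j *\<^sub>v (NM ^^ t) (PM x) j) $ k)"
proof (induction t)
  case 0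
  show ?case
  proof (intro ballI allI impI)
    fix i k assume i: "i \<in> {1..n}" and k: "k < d i"
    have pi: "PM x i = PV x i i" using i unfolding pert_map_def by auto
    have pj: "PM x j = PV x j j" if "j \<in> {1..i}" for j using that i unfolding pert_map_def by auto
    have pc: "PV x i i \<in> carrier_vec (d i)" using pert_coord[OF x i] by blast
    have "(\<Sum>j\<in>{1..i}. (-1) ^ (i - j) * (DD i j *\<^sub>v (NM ^^ 0) (PM x) j) $ k)
        = (\<Sum>j\<in>{1..i}. (-1) ^ (i - j) * (DD i j *\<^sub>v PV x j j) $ k)"
      using pj by simp
    also have "\<dots> = (-1) ^ (i - i) * (DD i i *\<^sub>v PV x i i) $ k +
        (\<Sum>j\<in>{1..<i}. (-1) ^ (i - j) * (DD i j *\<^sub>v PV x j j) $ k)"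
    proof -
      have "{1..i} = insert i {1..<i}" using i by auto
      thus ?thesis by simp
    qed
    also have "(-1) ^ (i - i) * (DD i i *\<^sub>v PV x i i) $ k = PV x i i $ k"
      using pc k by (simp add: Dmat_diag)
    also have "(\<Sum>j\<in>{1..<i}. (-1) ^ (i - j) * (DD i j *\<^sub>v PV x j j) $ k)
        = - (\<Sum>j\<in>{1..<i}. (-1) ^ (i - 1 - j) * (DD i j *\<^sub>v PV x j j) $ k)"
      by (simp add: sum_negf[symmetric] sign_step)
    also have "PV x i i $ k = x i $ k + (\<Sum>j\<in>{1..<i}. (-1) ^ (i - 1 - j) * (DD i j *\<^sub>v PV x j j) $ k)"
      using pert_coord[OF x i] k by blast
    finally show "(LM ^^ 0) x i $ k = (\<Sum>j\<in>{1..i}. (-1) ^ (i - j) * (DD i j *\<^sub>v (NM ^^ 0) (PM x) j) $ k)"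
      by simp
  qed
next
  case (Suc t)
  define a where "a = (LM ^^ t) x"
  define u where "u = (NM ^^ t) (PM x)"
  have a: "a \<in> state_space n d" unfolding a_def using ss_iter[OF ss_LM x] .
  have u: "u \<in> state_space n d" unfolding u_def using ss_iter[OF ss_NM ss_PM[OF x]] .
  have IH: "\<forall>i\<in>{1..n}. \<forall>k<d i. a i $ k = (\<Sum>j\<in>{1..i}. (-1) ^ (i - j) * (DD i j *\<^sub>v u j) $ k)"
    using Suc unfolding a_def u_def .
  have LinA: "(L i *\<^sub>v a i) $ k = (\<Sum>j\<in>{1..i}. (-1) ^ (i - j) * (L i *\<^sub>v (DD i j *\<^sub>v u j)) $ k)"
    if i: "i \<in> {1..n}" and k: "k < d i" for i k
  proof (rule mv_lin[OF Lc[OF i] ssD[OF a i]])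
    show "\<forall>j\<in>{1..i}. DD i j *\<^sub>v u j \<in> carrier_vec (d i)"
    proof
      fix j assume j: "j \<in> {1..i}"
      hence "j \<in> {1..n}" using i by auto
      thus "DD i j *\<^sub>v u j \<in> carrier_vec (d i)" using Dmat_dim[of j i] ssD[OF u] j i by auto
    qed
  qed (use IH i k in auto)
  show ?case
  proof (intro ballI allI impI)
    fix i k assume i: "i \<in> {1..n}" and k: "k < d i"
    have Nu: "(NM ^^ Suc t) (PM x) j = L j *\<^sub>v u j" if "j \<in> {1..n}" for j
      using that unfolding u_def by (simp add: Nom_map_def)
    have ex: "(DD i j *\<^sub>v (L j *\<^sub>v u j)) $ k = (L i *\<^sub>v (DD i j *\<^sub>v u j)) $ k -
        (if j < i then (C i *\<^sub>v (DD (i - 1) j *\<^sub>v u j)) $ k else 0)" if j: "j \<in> {1..i}" for j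
    proof (cases "j < i")
      case True
      hence "i \<in> {2..n}" using i j by auto
      thus ?thesis using sylv_vec[OF _ _ True ssD[OF u] k] j i True by auto
    next
      case False
      hence "j = i" using j by auto
      thus ?thesis using ssD[OF u i] Lc[OF i] by (simp add: Dmat_diag)
    qed
    have "(\<Sum>j\<in>{1..i}. (-1) ^ (i - j) * (DD i j *\<^sub>v (NM ^^ Suc t) (PM x) j) $ k)
       = (\<Sum>j\<in>{1..i}. (-1) ^ (i - j) * (DD i j *\<^sub>v (L j *\<^sub>v u j)) $ k)"
      using Nu i by (intro sum.cong refl) auto
    also have "\<dots> = (\<Sum>j\<in>{1..i}. (-1) ^ (i - j) * (L i *\<^sub>v (DD i j *\<^sub>v u j)) $ k) -
        (\<Sum>j\<in>{1..i}. (-1) ^ (i - j) * (if j < i then (C i *\<^sub>v (DD (i - 1) j *\<^sub>v u j)) $ k else 0))"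
      using ex by (simp add: sum_subtractf[symmetric] right_diff_distrib)
    also have "(\<Sum>j\<in>{1..i}. (-1) ^ (i - j) * (L i *\<^sub>v (DD i j *\<^sub>v u j)) $ k) = (L i *\<^sub>v a i) $ k"
      using LinA[OF i k] by simp
    also have "(\<Sum>j\<in>{1..i}. (-1) ^ (i - j) * (if j < i then (C i *\<^sub>v (DD (i - 1) j *\<^sub>v u j)) $ k else 0))
        = (\<Sum>j\<in>{1..i - 1}. (-1) ^ (i - j) * (C i *\<^sub>v (DD (i - 1) j *\<^sub>v u j)) $ k)"
    proof -
      have "(\<Sum>j\<in>{1..i}. (-1) ^ (i - j) * (if j < i then (C i *\<^sub>v (DD (i - 1) j *\<^sub>v u j)) $ k else 0))
          = (\<Sum>j\<in>{1..i - 1}. (-1) ^ (i - j) * (if j < i then (C i *\<^sub>v (DD (i - 1) j *\<^sub>v u j)) $ k else 0))"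
        by (rule sum.mono_neutral_right) auto
      also have "\<dots> = (\<Sum>j\<in>{1..i - 1}. (-1) ^ (i - j) * (C i *\<^sub>v (DD (i - 1) j *\<^sub>v u j)) $ k)"
        by (intro sum.cong refl) auto
      finally show ?thesis .
    qed
    also have "\<dots> = - (\<Sum>j\<in>{1..i - 1}. (-1) ^ (i - 1 - j) * (C i *\<^sub>v (DD (i - 1) j *\<^sub>v u j)) $ k)"
      unfolding sum_negf[symmetric]
    proof (intro sum.cong refl)
      fix j assume "j \<in> {1..i - 1}"
      hence "j < i" by auto
      thus "(-1) ^ (i - j) * (C i *\<^sub>v (DD (i - 1) j *\<^sub>v u j)) $ k =
            - ((-1) ^ (i - 1 - j) * (C i *\<^sub>v (DD (i - 1) j *\<^sub>v u j)) $ k)"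
        using sign_step[of j i] by simp
    qed
    finally have R: "(\<Sum>j\<in>{1..i}. (-1) ^ (i - j) * (DD i j *\<^sub>v (NM ^^ Suc t) (PM x) j) $ k)
       = (L i *\<^sub>v a i) $ k + (\<Sum>j\<in>{1..i - 1}. (-1) ^ (i - 1 - j) * (C i *\<^sub>v (DD (i - 1) j *\<^sub>v u j)) $ k)"
      by simp
    show "(LM ^^ Suc t) x i $ k = (\<Sum>j\<in>{1..i}. (-1) ^ (i - j) * (DD i j *\<^sub>v (NM ^^ Suc t) (PM x) j) $ k)"
    proof (cases "i = 1")
      case True
      have "(LM ^^ Suc t) x i = L 1 *\<^sub>v a 1" using True i unfolding a_def by (simp add: Lin_map_def)
      thus ?thesis unfolding R using True by simp
    next
      case False
      hence i2: "i \<in> {2..n}" using i by auto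
      have i1': "i - 1 \<in> {1..n}" using i2 by auto
      have "(LM ^^ Suc t) x i = L i *\<^sub>v a i + C i *\<^sub>v a (i - 1)"
        using i2 unfolding a_def by (simp add: Lin_map_def)
      moreover have "(C i *\<^sub>v a (i - 1)) $ k =
          (\<Sum>j\<in>{1..i - 1}. (-1) ^ (i - 1 - j) * (C i *\<^sub>v (DD (i - 1) j *\<^sub>v u j)) $ k)"
      proof (rule mv_lin[OF Cc[OF i2] ssD[OF a i1']])
        show "\<forall>j\<in>{1..i - 1}. DD (i - 1) j *\<^sub>v u j \<in> carrier_vec (d (i - 1))"
        proof
          fix j assume j: "j \<in> {1..i - 1}"
          hence "j \<in> {1..n}" using i by auto
          moreover have "DD (i - 1) j \<in> carrier_mat (d (i - 1)) (d j)"
            using Dmat_dim[of j "i - 1"] j i by auto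
          ultimately show "DD (i - 1) j *\<^sub>v u j \<in> carrier_vec (d (i - 1))"
            using ssD[OF u] by (meson mult_mat_vec_carrier)
        qed
      qed (use IH i1' k in auto)
      ultimately show ?thesis unfolding R using k Cc[OF i2] by simp
    qed
  qed
qed

end




context cascade begin

lemma diag_mv:
  assumes z: "z \<in> carrier_vec m"
  shows "mat_diag m f *\<^sub>v z = vec m (\<lambda>l. f l * z $ l)"
proof (rule eq_vecI)
  fix l assume l: "l < dim_vec (vec m (\<lambda>l. f l * z $ l))"
  hence l: "l < m" by simp
  have "(mat_diag m f *\<^sub>v z) $ l = (\<Sum>q<m. mat_diag m f $$ (l, q) * z $ q)"
    using mv_entry[OF mat_diag_dim z l] .
  also have "\<dots> = (\<Sum>q<m. if l = q then f q * z $ q else 0)"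
    using l by (intro sum.cong refl) (auto simp: mat_diag_def)
  also have "\<dots> = f l * z $ l" using l by (simp add: sum.delta)
  finally show "(mat_diag m f *\<^sub>v z) $ l = vec m (\<lambda>l. f l * z $ l) $ l" using l by simp
qed (simp add: mat_diag_def)

definition wv where "wv p j = mat_inv (V j) *\<^sub>v p j"

lemma nom_iter:
  assumes p: "p \<in> state_space n d" and j: "j \<in> {1..n}"
  shows "(NM ^^ t) p j = V j *\<^sub>v vec (d j) (\<lambda>m. lam j m ^ t * wv p j $ m)"
proof (induction t)
  case 0
  have wc: "wv p j \<in> carrier_vec (d j)" unfolding wv_def using Vinv(1)[OF j] ssD[OF p j] by simp
  have "vec (d j) (\<lambda>m. lam j m ^ 0 * wv p j $ m) = wv p j" using wc by (intro eq_vecI) auto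
  hence "V j *\<^sub>v vec (d j) (\<lambda>m. lam j m ^ 0 * wv p j $ m) = (V j * mat_inv (V j)) *\<^sub>v p j"
    unfolding wv_def using assoc_mult_mat_vec[OF Vc[OF j] Vinv(1)[OF j] ssD[OF p j]] by simp
  also have "\<dots> = p j" using Vinv(2)[OF j] ssD[OF p j] by simp
  finally show ?case by simp
next
  case (Suc t)
  define z where "z = vec (d j) (\<lambda>m. lam j m ^ t * wv p j $ m)"
  have zc: "z \<in> carrier_vec (d j)" unfolding z_def by simp
  have "(NM ^^ Suc t) p j = L j *\<^sub>v (NM ^^ t) p j" using j by (simp add: Nom_map_def)
  also have "\<dots> = L j *\<^sub>v (V j *\<^sub>v z)" using Suc unfolding z_def by simp
  also have "\<dots> = (L j * V j) *\<^sub>v z" using assoc_mult_mat_vec[OF Lc[OF j] Vc[OF j] zc] by simp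
  also have "\<dots> = (V j * mat_diag (d j) (lam j)) *\<^sub>v z" using diagonalize j by simp
  also have "\<dots> = V j *\<^sub>v (mat_diag (d j) (lam j) *\<^sub>v z)"
    using assoc_mult_mat_vec[OF Vc[OF j] mat_diag_dim zc] .
  also have "mat_diag (d j) (lam j) *\<^sub>v z = vec (d j) (\<lambda>m. lam j m ^ Suc t * wv p j $ m)"
    unfolding diag_mv[OF zc] unfolding z_def by (intro eq_vecI) auto
  finally show ?case .
qed

lemma nom_coord:
  assumes p: "p \<in> state_space n d" and j: "j \<in> {1..n}" and l: "l < d j"
  shows "(NM ^^ t) p j $ l = (\<Sum>m<d j. V j $$ (l, m) * (lam j m ^ t * wv p j $ m))"
  unfolding nom_iter[OF p j] using mv_entry[OF Vc[OF j] _ l] by simp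

lemma nom_tendsto0:
  assumes p: "p \<in> state_space n d" and j: "j \<in> {1..n}" and l: "l < d j"
    and small: "\<forall>m<d j. cmod (lam j m) < 1"
  shows "(\<lambda>t. (NM ^^ t) p j $ l) \<longlonglongrightarrow> 0"
proof -
  have "(\<lambda>t. \<Sum>m<d j. V j $$ (l, m) * (lam j m ^ t * wv p j $ m)) \<longlonglongrightarrow> (\<Sum>m<d j. V j $$ (l, m) * (0 * wv p j $ m))"
    using small by (intro tendsto_intros LIMSEQ_power_zero) auto
  thus ?thesis unfolding nom_coord[OF p j l] by simp
qed

lemma nom_bounded:
  assumes p: "p \<in> state_space n d" and j: "j \<in> {1..n}" and l: "l < d j"
    and le1: "\<forall>m<d j. cmod (lam j m) \<le> 1"
  shows "\<exists>B. \<forall>t. cmod ((NM ^^ t) p j $ l) \<le> B"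
proof -
  have "cmod ((NM ^^ t) p j $ l) \<le> (\<Sum>m<d j. cmod (V j $$ (l, m)) * cmod (wv p j $ m))" for t
  proof -
    have "cmod ((NM ^^ t) p j $ l) \<le> (\<Sum>m<d j. cmod (V j $$ (l, m) * (lam j m ^ t * wv p j $ m)))"
      unfolding nom_coord[OF p j l] by (rule norm_sum)
    also have "\<dots> \<le> (\<Sum>m<d j. cmod (V j $$ (l, m)) * cmod (wv p j $ m))"
    proof (intro sum_mono)
      fix m assume m: "m \<in> {..<d j}"
      have "cmod (lam j m) ^ t \<le> 1" using le1 m by (simp add: power_le_one)
      hence "cmod (lam j m ^ t * wv p j $ m) \<le> cmod (wv p j $ m)"
        by (simp add: norm_mult norm_power mult_left_le_one_le)
      thus "cmod (V j $$ (l, m) * (lam j m ^ t * wv p j $ m)) \<le> cmod (V j $$ (l, m)) * cmod (wv p j $ m)"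
        by (simp add: norm_mult mult_left_mono)
    qed
    finally show ?thesis .
  qed
  thus ?thesis by blast
qed

end

locale cascade_n = cascade +
  fixes Nrm :: "nat \<Rightarrow> complex vec \<Rightarrow> real"
  assumes n_pos: "1 \<le> n"
    and norms: "\<forall>i\<in>{1..n}. is_vnorm (d i) (Nrm i)"
    and norm_incr: "\<forall>i\<in>{1..<n}. op_norm (d i) (Nrm i) (L i) < op_norm (d (Suc i)) (Nrm (Suc i)) (L (Suc i))"
    and norm_le1: "op_norm (d n) (Nrm n) (L n) \<le> 1"
begin

abbreviation "opn j \<equiv> op_norm (d j) (Nrm j) (L j)"

lemma opn_chain_aux: "1 \<le> j \<Longrightarrow> j + Suc q = n \<Longrightarrow> opn j < opn n"
proof (induction q arbitrary: j)
  case 0 thus ?case using norm_incr by auto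
next
  case (Suc q)
  have "opn j < opn (Suc j)" using norm_incr Suc.prems by auto
  also have "opn (Suc j) < opn n" using Suc.IH[of "Suc j"] Suc.prems by auto
  finally show ?case .
qed

lemma opn_chain: "j \<in> {1..<n} \<Longrightarrow> opn j < opn n"
  using opn_chain_aux[of j "n - j - 1"] by auto

lemma lam_le_opn: assumes j: "j \<in> {1..n}" and m: "m < d j" shows "cmod (lam j m) \<le> opn j"
  using eigen_le_op[of "d j" "Nrm j" "L j" "col (V j) m" "lam j m"] norms j Lc[OF j] Vc[OF j] m
    colV_nz[OF j m] colV_eig[OF j m] by auto

lemma lam_small: assumes j: "j \<in> {1..<n}" and m: "m < d j" shows "cmod (lam j m) < 1"
proof -
  have j1: "j \<in> {1..n}" using j by auto
  show ?thesis using lam_le_opn[OF j1 m] opn_chain[OF j] norm_le1 by linarith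
qed

lemma lam_le1: assumes j: "j \<in> {1..n}" and m: "m < d j" shows "cmod (lam j m) \<le> 1"
proof (cases "j = n")
  case True thus ?thesis using lam_le_opn[OF j m] norm_le1 by simp
next
  case False
  hence "j \<in> {1..<n}" using j by auto
  thus ?thesis using lam_small[OF _ m] by (simp add: less_imp_le)
qed

lemma diff_split:
  assumes x: "x \<in> state_space n d" and i: "i \<in> {1..n}" and k: "k < d i"
  shows "(LM ^^ t) x i $ k - (NM ^^ t) (PM x) i $ k =
     (\<Sum>j\<in>{1..<i}. (-1) ^ (i - j) * (\<Sum>l<d j. DD i j $$ (k, l) * (NM ^^ t) (PM x) j $ l))"
proof -
  define u where "u = (NM ^^ t) (PM x)"
  have u: "u \<in> state_space n d" unfolding u_def using ss_iter[OF ss_NM ss_PM[OF x]] .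
  have "(LM ^^ t) x i $ k = (\<Sum>j\<in>{1..i}. (-1) ^ (i - j) * (DD i j *\<^sub>v u j) $ k)"
    using traj[OF x] i k unfolding u_def by blast
  also have "\<dots> = (-1) ^ (i - i) * (DD i i *\<^sub>v u i) $ k + (\<Sum>j\<in>{1..<i}. (-1) ^ (i - j) * (DD i j *\<^sub>v u j) $ k)"
  proof -
    have "{1..i} = insert i {1..<i}" using i by auto
    thus ?thesis by simp
  qed
  also have "(-1) ^ (i - i) * (DD i i *\<^sub>v u i) $ k = u i $ k" using ssD[OF u i] k by (simp add: Dmat_diag)
  also have "(\<Sum>j\<in>{1..<i}. (-1) ^ (i - j) * (DD i j *\<^sub>v u j) $ k) =
      (\<Sum>j\<in>{1..<i}. (-1) ^ (i - j) * (\<Sum>l<d j. DD i j $$ (k, l) * u j $ l))"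
  proof (intro sum.cong refl)
    fix j assume j: "j \<in> {1..<i}"
    hence j1: "j \<in> {1..n}" using i by auto
    have "DD i j \<in> carrier_mat (d i) (d j)" using Dmat_dim[of j i] j i by auto
    thus "(-1) ^ (i - j) * (DD i j *\<^sub>v u j) $ k = (-1) ^ (i - j) * (\<Sum>l<d j. DD i j $$ (k, l) * u j $ l)"
      using mv_entry[OF _ ssD[OF u j1] k] by simp
  qed
  finally show ?thesis unfolding u_def by simp
qed

lemma diff_tendsto:
  assumes x: "x \<in> state_space n d" and i: "i \<in> {1..n}" and k: "k < d i"
  shows "(\<lambda>t. (LM ^^ t) x i $ k - (NM ^^ t) (PM x) i $ k) \<longlonglongrightarrow> 0"
proof -
  have "(\<lambda>t. \<Sum>j\<in>{1..<i}. (-1) ^ (i - j) * (\<Sum>l<d j. DD i j $$ (k, l) * (NM ^^ t) (PM x) j $ l))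
        \<longlonglongrightarrow> (\<Sum>j\<in>{1..<i}. (-1) ^ (i - j) * (\<Sum>l<d j. DD i j $$ (k, l) * 0))"
  proof (intro tendsto_sum tendsto_mult tendsto_const)
    fix j l assume j: "j \<in> {1..<i}" and l: "l \<in> {..<d j}"
    have j1: "j \<in> {1..<n}" using j i by auto
    hence j2: "j \<in> {1..n}" by auto
    show "(\<lambda>t. (NM ^^ t) (PM x) j $ l) \<longlonglongrightarrow> 0"
      using nom_tendsto0[OF ss_PM[OF x] j2] l lam_small[OF j1] by auto
  qed
  thus ?thesis unfolding diff_split[OF x i k] by simp
qed

lemma a_bounded:
  assumes x: "x \<in> state_space n d" and i: "i \<in> {1..n}" and k: "k < d i"
  shows "\<exists>B. \<forall>t. cmod ((LM ^^ t) x i $ k) \<le> B"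
proof -
  obtain B1 where B1: "\<forall>t. cmod ((NM ^^ t) (PM x) i $ k) \<le> B1"
    using nom_bounded[OF ss_PM[OF x] i k] lam_le1[OF i] by blast
  have "Bseq (\<lambda>t. (LM ^^ t) x i $ k - (NM ^^ t) (PM x) i $ k)"
    using diff_tendsto[OF x i k] by (intro convergent_imp_Bseq) (auto simp: convergent_def)
  then obtain B2 where B2: "\<forall>t. cmod ((LM ^^ t) x i $ k - (NM ^^ t) (PM x) i $ k) \<le> B2"
    unfolding Bseq_def by auto
  have "cmod ((LM ^^ t) x i $ k) \<le> B2 + B1" for t
  proof -
    have "(LM ^^ t) x i $ k = ((LM ^^ t) x i $ k - (NM ^^ t) (PM x) i $ k) + (NM ^^ t) (PM x) i $ k" by simp
    hence "cmod ((LM ^^ t) x i $ k) \<le> cmod ((LM ^^ t) x i $ k - (NM ^^ t) (PM x) i $ k) + cmod ((NM ^^ t) (PM x) i $ k)"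
      by (metis norm_triangle_ineq)
    thus ?thesis using B1 B2 by (meson add_mono order_trans)
  qed
  thus ?thesis by blast
qed

end





lemma ssD': "x \<in> state_space n d \<Longrightarrow> i \<in> {1..n} \<Longrightarrow> x i \<in> carrier_vec (d i)"
  unfolding state_space_def by auto

lemma prod_norm_tri:
  assumes norms: "\<forall>i\<in>{1..n}. is_vnorm (d i) (Nrm i)"
    and u: "u \<in> state_space n d" and v: "v \<in> state_space n d" and w: "w \<in> state_space n d"
  shows "prod_norm n Nrm (state_diff u w) \<le> prod_norm n Nrm (state_diff u v) + prod_norm n Nrm (state_diff w v)"
proof -
  have "Nrm i (u i - w i) \<le> Nrm i (u i - v i) + Nrm i (w i - v i)" if i: "i \<in> {1..n}" for i
  proof -
    have N: "is_vnorm (d i) (Nrm i)" using norms i by blast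
    have "Nrm i (u i - w i) \<le> Nrm i (u i - v i) + Nrm i (v i - w i)"
      using vnorm_tri[OF N ssD'[OF u i] ssD'[OF v i] ssD'[OF w i]] .
    also have "Nrm i (v i - w i) = Nrm i (w i - v i)" using vnorm_sym[OF N ssD'[OF v i] ssD'[OF w i]] .
    finally show ?thesis .
  qed
  hence "(\<Sum>i=1..n. Nrm i (u i - w i)) \<le> (\<Sum>i=1..n. Nrm i (u i - v i) + Nrm i (w i - v i))"
    by (intro sum_mono) auto
  thus ?thesis unfolding prod_norm_def state_diff_def by (simp add: sum.distrib)
qed

lemma conv_prod:
  assumes norms: "\<forall>i\<in>{1..n}. is_vnorm (d i) (Nrm i)"
    and w: "\<And>t. w t \<in> state_space n d" and z: "z \<in> state_space n d"
    and lim: "\<forall>i\<in>{1..n}. \<forall>k<d i. (\<lambda>t. w t i $ k) \<longlonglongrightarrow> z i $ k"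
  shows "(\<lambda>t. prod_norm n Nrm (state_diff (w t) z)) \<longlonglongrightarrow> 0"
proof -
  have "(\<lambda>t. \<Sum>i=1..n. Nrm i (w t i - z i)) \<longlonglongrightarrow> (\<Sum>i=1..n. 0)"
  proof (intro tendsto_sum)
    fix i assume i: "i \<in> {1..n}"
    have N: "is_vnorm (d i) (Nrm i)" using norms i by blast
    obtain K where K: "K \<ge> 0" "\<forall>x\<in>carrier_vec (d i). Nrm i x \<le> K * (\<Sum>k<d i. cmod (x $ k))"
      using vnorm_upper[OF N] by blast
    have wc: "w t i \<in> carrier_vec (d i)" for t using ssD'[OF w i] .
    have zc: "z i \<in> carrier_vec (d i)" using ssD'[OF z i] .
    have up: "Nrm i (w t i - z i) \<le> K * (\<Sum>k<d i. cmod (w t i $ k - z i $ k))" for t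
    proof -
      have mc: "w t i - z i \<in> carrier_vec (d i)" using wc zc by simp
      have "Nrm i (w t i - z i) \<le> K * (\<Sum>k<d i. cmod ((w t i - z i) $ k))" using K(2) mc by blast
      also have "(\<Sum>k<d i. cmod ((w t i - z i) $ k)) = (\<Sum>k<d i. cmod (w t i $ k - z i $ k))"
        using zc by (intro sum.cong refl) auto
      finally show ?thesis .
    qed
    have lo: "0 \<le> Nrm i (w t i - z i)" for t using vnorm_basic(1)[OF N] wc zc by simp
    have "(\<lambda>t. K * (\<Sum>k<d i. cmod (w t i $ k - z i $ k))) \<longlonglongrightarrow> K * (\<Sum>k<d i. cmod (z i $ k - z i $ k))"
      using lim i by (intro tendsto_intros) auto
    hence hi: "(\<lambda>t. K * (\<Sum>k<d i. cmod (w t i $ k - z i $ k))) \<longlonglongrightarrow> 0" by simp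
    show "(\<lambda>t. Nrm i (w t i - z i)) \<longlonglongrightarrow> 0"
      by (rule real_tendsto_sandwich[OF _ _ tendsto_const hi]) (use lo up in auto)
  qed
  thus ?thesis unfolding prod_norm_def state_diff_def by simp
qed


lemma subseq_from_frequent:
  fixes P :: "nat \<Rightarrow> bool"
  assumes "\<forall>N. \<exists>t\<ge>N. P t"
  shows "\<exists>r::nat\<Rightarrow>nat. strict_mono r \<and> (\<forall>m. P (r m))"
proof -
  define g where "g N = (SOME t. t \<ge> N \<and> P t)" for N
  have g: "g N \<ge> N \<and> P (g N)" for N unfolding g_def using assms by (metis (mono_tags, lifting) someI_ex)
  define r where "r = rec_nat (g 0) (\<lambda>_ prev. g (Suc prev))"
  have r0: "r 0 = g 0" unfolding r_def by simp
  have rS: "r (Suc m) = g (Suc (r m))" for m unfolding r_def by simp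
  have "strict_mono r" unfolding strict_mono_Suc_iff using g rS by (metis Suc_le_lessD)
  moreover have "\<forall>m. P (r m)"
  proof
    fix m show "P (r m)" by (cases m) (use g r0 rS in auto)
  qed
  ultimately show ?thesis by (intro exI[of _ r] conjI)
qed

lemma conv_lemma:
  fixes a b :: "nat \<Rightarrow> nat \<Rightarrow> complex vec"
  assumes norms: "\<forall>i\<in>{1..n}. is_vnorm (d i) (Nrm i)"
    and tau_ss: "\<And>x. x \<in> state_space n d \<Longrightarrow> tau x \<in> state_space n d"
    and cont: "cont_state n d Nrm tau"
    and a: "\<And>t. a t \<in> state_space n d" and b: "\<And>t. b t \<in> state_space n d"
    and bnd: "\<forall>i\<in>{1..n}. \<forall>k<d i. \<exists>B. \<forall>t. cmod (a t i $ k) \<le> B"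
    and dif: "\<forall>i\<in>{1..n}. \<forall>k<d i. (\<lambda>t. a t i $ k - b t i $ k) \<longlonglongrightarrow> 0"
  shows "(\<lambda>t. prod_norm n Nrm (state_diff (tau (a t)) (tau (b t)))) \<longlonglongrightarrow> 0"
proof (rule ccontr)
  define F where "F t = prod_norm n Nrm (state_diff (tau (a t)) (tau (b t)))" for t
  have Fnn: "F t \<ge> 0" for t
  proof -
    have "0 \<le> Nrm i (tau (a t) i - tau (b t) i)" if i: "i \<in> {1..n}" for i
      using vnorm_basic(1)[of "d i" "Nrm i"] norms i ssD'[OF tau_ss[OF a] i] ssD'[OF tau_ss[OF b] i] by simp
    thus ?thesis unfolding F_def prod_norm_def state_diff_def by (intro sum_nonneg) auto
  qed
  assume "\<not> (\<lambda>t. prod_norm n Nrm (state_diff (tau (a t)) (tau (b t)))) \<longlonglongrightarrow> 0"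
  hence "\<not> F \<longlonglongrightarrow> 0" unfolding F_def[abs_def] .
  then obtain e where e: "e > 0" "\<forall>N. \<exists>t\<ge>N. \<not> norm (F t - 0) < e"
    unfolding LIMSEQ_iff by blast
  hence "\<forall>N. \<exists>t\<ge>N. F t \<ge> e" using Fnn by (auto simp: not_less)
  hence "\<exists>r::nat\<Rightarrow>nat. strict_mono r \<and> (\<forall>m. F (r m) \<ge> e)"
    by (rule subseq_from_frequent)
  then obtain r :: "nat \<Rightarrow> nat" where r: "strict_mono r" "\<And>m. F (r m) \<ge> e" by blast
  define I where "I = Sigma {1..n} (\<lambda>i. {..<d i})"
  have finI: "finite I" unfolding I_def by auto
  have bndI: "\<forall>p\<in>I. \<exists>B. \<forall>t. cmod (a (r t) (fst p) $ snd p) \<le> B"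
  proof
    fix p assume "p \<in> I"
    hence "fst p \<in> {1..n}" "snd p < d (fst p)" unfolding I_def by auto
    then obtain B where "\<forall>t. cmod (a t (fst p) $ snd p) \<le> B" using bnd by blast
    thus "\<exists>B. \<forall>t. cmod (a (r t) (fst p) $ snd p) \<le> B" by blast
  qed
  obtain s where s: "strict_mono s" "\<forall>p\<in>I. \<exists>l. (\<lambda>t. a (r (s t)) (fst p) $ snd p) \<longlonglongrightarrow> l"
    using subseq_complex[OF finI, of "\<lambda>t p. a (r t) (fst p) $ snd p"] bndI by blast
  then obtain lz where lz: "\<And>p. p \<in> I \<Longrightarrow> (\<lambda>t. a (r (s t)) (fst p) $ snd p) \<longlonglongrightarrow> lz p"
    by metis
  define q where "q t = r (s t)" for t
  have q: "strict_mono q" unfolding q_def using strict_mono_o[OF r(1) s(1)] by (simp add: comp_def)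
  define z where "z i = (if i \<in> {1..n} then vec (d i) (\<lambda>k. lz (i, k)) else vec 0 (\<lambda>_. 0))" for i
  have zss: "z \<in> state_space n d" unfolding state_space_def z_def by auto
  have az: "\<forall>i\<in>{1..n}. \<forall>k<d i. (\<lambda>t. a (q t) i $ k) \<longlonglongrightarrow> z i $ k"
  proof (intro ballI allI impI)
    fix i k assume i: "i \<in> {1..n}" and k: "k < d i"
    have "(i, k) \<in> I" unfolding I_def using i k by auto
    from lz[OF this] show "(\<lambda>t. a (q t) i $ k) \<longlonglongrightarrow> z i $ k" unfolding q_def z_def using i k by simp
  qed
  have bz: "\<forall>i\<in>{1..n}. \<forall>k<d i. (\<lambda>t. b (q t) i $ k) \<longlonglongrightarrow> z i $ k"
  proof (intro ballI allI impI)
    fix i k assume i: "i \<in> {1..n}" and k: "k < d i"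
    have "(\<lambda>t. a (q t) i $ k - b (q t) i $ k) \<longlonglongrightarrow> 0"
      using LIMSEQ_subseq_LIMSEQ[OF dif[rule_format, OF i k] q] by (simp add: comp_def)
    from tendsto_diff[OF az[rule_format, OF i k] this]
    show "(\<lambda>t. b (q t) i $ k) \<longlonglongrightarrow> z i $ k" by simp
  qed
  have Pa: "(\<lambda>t. prod_norm n Nrm (state_diff (a (q t)) z)) \<longlonglongrightarrow> 0"
    by (rule conv_prod[OF norms a zss az])
  have Pb: "(\<lambda>t. prod_norm n Nrm (state_diff (b (q t)) z)) \<longlonglongrightarrow> 0"
    by (rule conv_prod[OF norms b zss bz])
  obtain \<delta> where \<delta>: "\<delta> > 0" "\<forall>y\<in>state_space n d. prod_norm n Nrm (state_diff y z) < \<delta> \<longrightarrow>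
      prod_norm n Nrm (state_diff (tau y) (tau z)) < e / 2"
    using cont zss e(1) unfolding cont_state_def by (meson half_gt_zero)
  obtain T1 where T1: "\<forall>t\<ge>T1. norm (prod_norm n Nrm (state_diff (a (q t)) z) - 0) < \<delta>"
    using Pa \<delta>(1) unfolding LIMSEQ_iff by blast
  obtain T2 where T2: "\<forall>t\<ge>T2. norm (prod_norm n Nrm (state_diff (b (q t)) z) - 0) < \<delta>"
    using Pb \<delta>(1) unfolding LIMSEQ_iff by blast
  define T where "T = max T1 T2"
  have "norm (prod_norm n Nrm (state_diff (a (q T)) z) - 0) < \<delta>" using T1 unfolding T_def by simp
  hence "prod_norm n Nrm (state_diff (a (q T)) z) < \<delta>" by (simp add: abs_less_iff)
  hence A: "prod_norm n Nrm (state_diff (tau (a (q T))) (tau z)) < e / 2" using \<delta>(2) a by blast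
  have "norm (prod_norm n Nrm (state_diff (b (q T)) z) - 0) < \<delta>" using T2 unfolding T_def by simp
  hence "prod_norm n Nrm (state_diff (b (q T)) z) < \<delta>" by (simp add: abs_less_iff)
  hence B: "prod_norm n Nrm (state_diff (tau (b (q T))) (tau z)) < e / 2" using \<delta>(2) b by blast
  have "F (q T) \<le> prod_norm n Nrm (state_diff (tau (a (q T))) (tau z)) + prod_norm n Nrm (state_diff (tau (b (q T))) (tau z))"
    unfolding F_def by (rule prod_norm_tri[OF norms tau_ss[OF a] tau_ss[OF zss] tau_ss[OF b]])
  also have "\<dots> < e" using A B by simp
  finally have "F (q T) < e" .
  moreover have "F (q T) \<ge> e" unfolding q_def using r(2) by simp
  ultimately show False by simp
qed



theorem theorem3:
  fixes n :: nat and d :: "nat \<Rightarrow> nat"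
    and Nrm :: "nat \<Rightarrow> complex vec \<Rightarrow> real"
    and L V :: "nat \<Rightarrow> complex mat" and C :: "nat \<Rightarrow> complex mat"
    and lam :: "nat \<Rightarrow> nat \<Rightarrow> complex"
    and N1 :: "complex vec \<Rightarrow> complex vec"
    and Nf :: "nat \<Rightarrow> complex vec \<Rightarrow> complex vec \<Rightarrow> complex vec"
    and tau tinv :: "(nat \<Rightarrow> complex vec) \<Rightarrow> (nat \<Rightarrow> complex vec)"
    and y :: "nat \<Rightarrow> complex vec"
  assumes n_pos: "1 \<le> n"
    and d_pos: "\<forall>i\<in>{1..n}. 1 \<le> d i"
    and norms: "\<forall>i\<in>{1..n}. is_vnorm (d i) (Nrm i)"
    and L_dim: "\<forall>i\<in>{1..n}. L i \<in> carrier_mat (d i) (d i)"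
    and C_dim: "\<forall>i\<in>{2..n}. C i \<in> carrier_mat (d i) (d (i - 1))"
    and V_dim: "\<forall>i\<in>{1..n}. V i \<in> carrier_mat (d i) (d i)"
    and L_inv: "\<forall>i\<in>{1..n}. invertible_mat (L i)"
    and V_inv: "\<forall>i\<in>{1..n}. invertible_mat (V i)"
    and diagonalize: "\<forall>i\<in>{1..n}. L i * V i = V i * mat_diag (d i) (lam i)"
    and spec_disj: "\<forall>i\<in>{1..n}. \<forall>j\<in>{1..n}. i \<noteq> j \<longrightarrow> spectrum (L i) \<inter> spectrum (L j) = {}"
    and norm_incr: "\<forall>i\<in>{1..<n}. op_norm (d i) (Nrm i) (L i) < op_norm (d (Suc i)) (Nrm (Suc i)) (L (Suc i))"
    and norm_le1: "op_norm (d n) (Nrm n) (L n) \<le> 1"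
    and N1_dim: "\<forall>u\<in>carrier_vec (d 1). N1 u \<in> carrier_vec (d 1)"
    and Nf_dim: "\<forall>i\<in>{2..n}. \<forall>u\<in>carrier_vec (d (i - 1)). \<forall>v\<in>carrier_vec (d i).
                   Nf i u v \<in> carrier_vec (d i)"
    and homeo: "homeo_state n d Nrm tau tinv"
    and conj: "\<forall>x\<in>state_space n d. Lin_map n L C x = tinv (NonLin_map n L C N1 Nf (tau x))"
    and y_in: "y \<in> state_space n d"
  shows "(\<lambda>t. prod_norm n Nrm
            (state_diff ((NonLin_map n L C N1 Nf ^^ t) y)
                        (((tau \<circ> Nom_map n L \<circ> tinv) ^^ t) ((tau \<circ> pert_map n d L C V lam \<circ> tinv) y))))
         \<longlonglongrightarrow> 0"
proof -
  interpret cascade_n n d L V C lam Nrm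
    by unfold_locales (use L_dim C_dim V_dim L_inv V_inv diagonalize spec_disj n_pos norms norm_incr norm_le1 in auto)
  have tau_ss: "\<And>z. z \<in> state_space n d \<Longrightarrow> tau z \<in> state_space n d"
    using homeo unfolding homeo_state_def by blast
  have tinv_ss: "\<And>z. z \<in> state_space n d \<Longrightarrow> tinv z \<in> state_space n d"
    using homeo unfolding homeo_state_def by blast
  have tt: "\<And>z. z \<in> state_space n d \<Longrightarrow> tinv (tau z) = z"
    using homeo unfolding homeo_state_def by blast
  have tt': "\<And>z. z \<in> state_space n d \<Longrightarrow> tau (tinv z) = z"
    using homeo unfolding homeo_state_def by blast
  have cont: "cont_state n d Nrm tau" using homeo unfolding homeo_state_def by blast
  have ss_NL: "NonLin_map n L C N1 Nf z \<in> state_space n d" if z: "z \<in> state_space n d" for z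
  proof -
    have "NonLin_map n L C N1 Nf z i \<in> carrier_vec (d i)" if i: "i \<in> {1..n}" for i
    proof (cases "i = 1")
      case True
      have "N1 (z 1) \<in> carrier_vec (d 1)" using N1_dim ssD[OF z] i True by auto
      thus ?thesis using True Lc[OF i] ssD[OF z i] n_pos unfolding NonLin_map_def by auto
    next
      case False
      hence i2: "i \<in> {2..n}" using i by auto
      have i1: "i - 1 \<in> {1..n}" using i2 by auto
      have "Nf i (z (i - 1)) (z i) \<in> carrier_vec (d i)" using Nf_dim i2 ssD[OF z i1] ssD[OF z i] by blast
      thus ?thesis using Lc[OF i] Cc[OF i2] ssD[OF z i] ssD[OF z i1] i2 False
        unfolding NonLin_map_def by auto
    qed
    moreover have "NonLin_map n L C N1 Nf z i = vec 0 (\<lambda>_. 0)" if "i \<notin> {1..n}" for i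
      using z that unfolding state_space_def NonLin_map_def by auto
    ultimately show ?thesis unfolding state_space_def by blast
  qed
  define x where "x = tinv y"
  have x: "x \<in> state_space n d" unfolding x_def using tinv_ss[OF y_in] .
  have tx: "tau x = y" unfolding x_def using tt'[OF y_in] .
  have NL: "(NonLin_map n L C N1 Nf ^^ t) y = tau ((Lin_map n L C ^^ t) x)" for t
  proof (induction t)
    case 0 thus ?case using tx by simp
  next
    case (Suc t)
    define z where "z = (Lin_map n L C ^^ t) x"
    have z: "z \<in> state_space n d" unfolding z_def using ss_iter[OF ss_LM x] .
    have "(NonLin_map n L C N1 Nf ^^ Suc t) y = NonLin_map n L C N1 Nf (tau z)"
      using Suc unfolding z_def by simp
    also have "\<dots> = tau (tinv (NonLin_map n L C N1 Nf (tau z)))"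
      using tt'[OF ss_NL[OF tau_ss[OF z]]] by simp
    also have "tinv (NonLin_map n L C N1 Nf (tau z)) = Lin_map n L C z" using conj z by simp
    also have "Lin_map n L C z = (Lin_map n L C ^^ Suc t) x" unfolding z_def by simp
    finally show ?case .
  qed
  have NOM: "((tau \<circ> Nom_map n L \<circ> tinv) ^^ t) ((tau \<circ> pert_map n d L C V lam \<circ> tinv) y)
      = tau ((Nom_map n L ^^ t) (pert_map n d L C V lam x))" for t
  proof (induction t)
    case 0 thus ?case unfolding x_def by simp
  next
    case (Suc t)
    define z where "z = (Nom_map n L ^^ t) (pert_map n d L C V lam x)"
    have z: "z \<in> state_space n d" unfolding z_def using ss_iter[OF ss_NM ss_PM[OF x]] .
    have "((tau \<circ> Nom_map n L \<circ> tinv) ^^ Suc t) ((tau \<circ> pert_map n d L C V lam \<circ> tinv) y)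
        = (tau \<circ> Nom_map n L \<circ> tinv) (((tau \<circ> Nom_map n L \<circ> tinv) ^^ t) ((tau \<circ> pert_map n d L C V lam \<circ> tinv) y))"
      by (simp only: funpow.simps(2) comp_apply)
    also have "\<dots> = (tau \<circ> Nom_map n L \<circ> tinv) (tau z)" unfolding Suc z_def ..
    also have "\<dots> = tau (Nom_map n L (tinv (tau z)))" by simp
    also have "\<dots> = tau (Nom_map n L z)" using tt[OF z] by simp
    also have "\<dots> = tau ((Nom_map n L ^^ Suc t) (pert_map n d L C V lam x))" unfolding z_def by simp
    finally show ?case .
  qed
  have main: "(\<lambda>t. prod_norm n Nrm (state_diff (tau ((Lin_map n L C ^^ t) x))
                 (tau ((Nom_map n L ^^ t) (pert_map n d L C V lam x))))) \<longlonglongrightarrow> 0"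
  proof (rule conv_lemma[OF norms tau_ss cont])
    show "\<And>t. (Lin_map n L C ^^ t) x \<in> state_space n d" using ss_iter[OF ss_LM x] .
    show "\<And>t. (Nom_map n L ^^ t) (pert_map n d L C V lam x) \<in> state_space n d"
      using ss_iter[OF ss_NM ss_PM[OF x]] .
    show "\<forall>i\<in>{1..n}. \<forall>k<d i. \<exists>B. \<forall>t. cmod ((Lin_map n L C ^^ t) x i $ k) \<le> B"
      using a_bounded[OF x] by blast
    show "\<forall>i\<in>{1..n}. \<forall>k<d i. (\<lambda>t. (Lin_map n L C ^^ t) x i $ k -
            (Nom_map n L ^^ t) (pert_map n d L C V lam x) i $ k) \<longlonglongrightarrow> 0"
      using diff_tendsto[OF x] by blast
  qed (auto)
  show ?thesis unfolding NL NOM using main .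
qed


end
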